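(* For every binary relation $S$ on $\Sigma^*$ there is a CRPQ($S$) query $\phi(x,x')$ and a deterministic logarithmic-space algorithm that, given a relation $R\in\mathsf{REC}_2$ over $\Sigma$, constructs a labeled graph $G$ and two nodes $v,v'$ of $G$ such that $G\models\phi(v,v')$ if and only if $R\cap S\neq\emptyset$.
   Context: $\Sigma$ is a finite alphabet. $\mathsf{REC}_2$ is the class of binary relations on $\Sigma^*$ that are finite unions of products $L\times K$ of regular languages, given by NFAs for these languages. The graph $G$ may be labeled over an alphabet extending $\Sigma$ by finitely many fresh symbols, and $S$ is then regarded as a relation on words over this larger alphabet. A labeled graph over an alphabet $\Delta$ is $G=(V,E)$ with $V$ finite and $E\subseteq V\times\Delta\times V$; a path is a sequence of consecutive edges and its label is the word of edge labels. A CRPQ($S$) query has the form $\phi(\bar x)=\exists\bar y\,(\bigwedge_{i=1}^m (u_i\xrightarrow{\chi_i:L_i}u_i')\wedge\bigwedge_{(i,j)\in I}S(\chi_i,\chi_j))$ with $u_i,u_i'$ among $\bar x,\bar y$, $L_i$ regular languages and $I\subseteq[m]^2$; $G\models\phi(\bar a)$ iff there are nodes $\bar b$ for $\bar y$ and paths $\rho_i$ from (the interpretation of) $u_i$ to $u_i'$ with labels in $L_i$ such that the pair of labels of $\rho_i,\rho_j$ is in $S$ for every $(i,j)\in I$. *)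

theory Defs
  imports Complex_Main
begin

datatype 'a nfa = NFA (initial: "nat list") (final: "nat list") (trans: "(nat \<times> 'a \<times> nat) list")

inductive nrun :: "'a nfa \<Rightarrow> nat \<Rightarrow> 'a list \<Rightarrow> nat \<Rightarrow> bool" for A where
  nrun_nil: "nrun A p [] p"
| nrun_cons: "(p, a, r) \<in> set (trans A) \<Longrightarrow> nrun A r w q \<Longrightarrow> nrun A p (a # w) q"

definition nlang :: "'a nfa \<Rightarrow> 'a list set" where
  "nlang A = {w. \<exists>p\<in>set (initial A). \<exists>q\<in>set (final A). nrun A p w q}"

definition rec_rel :: "('a nfa \<times> 'a nfa) list \<Rightarrow> ('a list \<times> 'a list) set" where
  "rec_rel Rs = (\<Union>(A, B)\<in>set Rs. nlang A \<times> nlang B)"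

text \<open>Nodes are 0..<gn G; edges are labeled triples.\<close>
datatype 'l graph = Graph (gn: nat) (gedges: "(nat \<times> 'l \<times> nat) list")

definition graph_wf :: "'l graph \<Rightarrow> bool" where
  "graph_wf G \<longleftrightarrow> (\<forall>(u, a, w)\<in>set (gedges G). u < gn G \<and> w < gn G)"

inductive gpath :: "'l graph \<Rightarrow> nat \<Rightarrow> 'l list \<Rightarrow> nat \<Rightarrow> bool" for G where
  gpath_nil: "u < gn G \<Longrightarrow> gpath G u [] u"
| gpath_cons: "(u, a, w) \<in> set (gedges G) \<Longrightarrow> gpath G w ws v \<Longrightarrow> gpath G u (a # ws) v"

text \<open>Variables are nats; variable 0 is the free variable x, variable 1 is x',
  all other variables are existentially quantified. Atoms (u_i, L_i, u_i'),
  and the list of index pairs I.\<close>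
datatype 'a crpq = CRPQ (atoms: "(nat \<times> 'a nfa \<times> nat) list") (pairs: "(nat \<times> nat) list")

definition crpq_wf :: "'a crpq \<Rightarrow> bool" where
  "crpq_wf Q \<longleftrightarrow> (\<forall>(i, j)\<in>set (pairs Q). i < length (atoms Q) \<and> j < length (atoms Q))"

definition crpq_holds ::
  "('a list \<times> 'a list) set \<Rightarrow> 'a graph \<Rightarrow> 'a crpq \<Rightarrow> nat \<Rightarrow> nat \<Rightarrow> bool" where
  "crpq_holds S G Q a a' \<longleftrightarrow>
     (\<exists>\<nu> :: nat \<Rightarrow> nat. \<nu> 0 = a \<and> \<nu> 1 = a' \<and>
       (\<exists>ws :: 'a list list. length ws = length (atoms Q) \<and>
          (\<forall>i < length (atoms Q). case atoms Q ! i of (u, A, u') \<Rightarrow>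
              gpath G (\<nu> u) (ws ! i) (\<nu> u') \<and> ws ! i \<in> nlang A) \<and>
          (\<forall>(i, j)\<in>set (pairs Q). (ws ! i, ws ! j) \<in> S)))"

text \<open>S regarded as a relation on words over the extended alphabet 's + nat
  (Inr k are the fresh symbols).\<close>
definition liftS :: "('s list \<times> 's list) set \<Rightarrow> (('s + nat) list \<times> ('s + nat) list) set" where
  "liftS S = {(map Inl u, map Inl w) | u w. (u, w) \<in> S}"

datatype 's tok = TSym 's | TBit bool | TOpen | TClose | TComma | TFresh

function enc_nat :: "nat \<Rightarrow> 's tok list" where
  "enc_nat n = (if n = 0 then [] else TBit (odd n) # enc_nat (n div 2))"
  by auto
termination by (relation "measure id") auto

definition enc_list :: "('x \<Rightarrow> 's tok list) \<Rightarrow> 'x list \<Rightarrow> 's tok list" where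
  "enc_list f xs = TOpen # concat (map (\<lambda>x. f x @ [TComma]) xs) @ [TClose]"

definition enc_tr :: "nat \<times> 's \<times> nat \<Rightarrow> 's tok list" where
  "enc_tr t = (case t of (p, a, q) \<Rightarrow> enc_nat p @ TComma # TSym a # TComma # enc_nat q)"

definition enc_nfa :: "'s nfa \<Rightarrow> 's tok list" where
  "enc_nfa A = TOpen # enc_list enc_nat (initial A) @ enc_list enc_nat (final A)
                 @ enc_list enc_tr (trans A) @ [TClose]"

definition enc_rec :: "('s nfa \<times> 's nfa) list \<Rightarrow> 's tok list" where
  "enc_rec Rs = enc_list (\<lambda>(A, B). enc_nfa A @ enc_nfa B) Rs"

fun enc_lab :: "'s + nat \<Rightarrow> 's tok list" where
  "enc_lab (Inl a) = [TSym a]"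
| "enc_lab (Inr k) = TFresh # enc_nat k"

definition enc_edge :: "nat \<times> ('s + nat) \<times> nat \<Rightarrow> 's tok list" where
  "enc_edge e = (case e of (u, l, w) \<Rightarrow> enc_nat u @ TComma # enc_lab l @ TComma # enc_nat w)"

definition enc_out :: "('s + nat) graph \<Rightarrow> nat \<Rightarrow> nat \<Rightarrow> 's tok list" where
  "enc_out G v v' = TOpen # enc_nat (gn G) @ TComma # enc_list enc_edge (gedges G)
                      @ TComma # enc_nat v @ TComma # enc_nat v' @ [TClose]"

datatype dir = Lft | Stay | Rgt

text \<open>States 0..<nq (0 initial, 1 halting), work symbols 0..<nw (0 blank).
  delta q (input symbol, None = beyond the end) (work symbol) =
  (new state, input head move, written work symbol, work head move, optional output symbol).\<close>
datatype ('i, 'o) ltm = LTM (tm_nq: nat) (tm_nw: nat)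
  (tm_delta: "nat \<Rightarrow> 'i option \<Rightarrow> nat \<Rightarrow> nat \<times> dir \<times> nat \<times> dir \<times> 'o option")

definition tm_wf :: "('i, 'o) ltm \<Rightarrow> bool" where
  "tm_wf M \<longleftrightarrow> 2 \<le> tm_nq M \<and> 1 \<le> tm_nw M \<and>
     (\<forall>q < tm_nq M. \<forall>a w. w < tm_nw M \<longrightarrow>
        (case tm_delta M q a w of (q', _, s, _, _) \<Rightarrow> q' < tm_nq M \<and> s < tm_nw M))"

fun move :: "dir \<Rightarrow> nat \<Rightarrow> nat" where
  "move Lft n = n - 1"
| "move Stay n = n"
| "move Rgt n = Suc n"

type_synonym 'o config = "nat \<times> nat \<times> (nat \<Rightarrow> nat) \<times> nat \<times> 'o list"

definition tm_step :: "('i, 'o) ltm \<Rightarrow> 'i list \<Rightarrow> 'o config \<Rightarrow> 'o config" where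
  "tm_step M x c = (case c of (q, ih, wk, wh, out) \<Rightarrow>
     if q = 1 then c else
     (case tm_delta M q (if ih < length x then Some (x ! ih) else None) (wk wh) of
        (q', di, s, dw, ob) \<Rightarrow>
          (q', min (move di ih) (length x), wk(wh := s), move dw wh,
           out @ (case ob of None \<Rightarrow> [] | Some b \<Rightarrow> [b]))))"

definition tm_init :: "'o config" where
  "tm_init = (0, 0, \<lambda>_. 0, 0, [])"

definition tm_conf :: "('i, 'o) ltm \<Rightarrow> 'i list \<Rightarrow> nat \<Rightarrow> 'o config" where
  "tm_conf M x t = (tm_step M x ^^ t) tm_init"

definition conf_state :: "'o config \<Rightarrow> nat" where "conf_state c = fst c"
definition conf_whead :: "'o config \<Rightarrow> nat" where "conf_whead c = fst (snd (snd (snd c)))"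
definition conf_out :: "'o config \<Rightarrow> 'o list" where "conf_out c = snd (snd (snd (snd c)))"

definition tm_computes :: "('i, 'o) ltm \<Rightarrow> 'i list \<Rightarrow> 'o list \<Rightarrow> bool" where
  "tm_computes M x y \<longleftrightarrow>
     (\<exists>t. conf_state (tm_conf M x t) = 1 \<and> conf_out (tm_conf M x t) = y)"

definition tm_logspace_on :: "('i, 'o) ltm \<Rightarrow> nat \<Rightarrow> 'i list \<Rightarrow> bool" where
  "tm_logspace_on M c x \<longleftrightarrow>
     (\<forall>t. real (conf_whead (tm_conf M x t)) \<le> real c * log 2 (real (length x) + 2))"

end

theory Submission
  imports Defs
begin


datatype 's ins = Emit (etok: "'s tok") | Inter | Copy | Skip | Sym

datatype pidt = PInit bool | PFin bool | PTr bool

datatype st = Init | Halt | P1 nat | L nat | R0 | CS | NI bool | IL bool | FLo bool | FL bool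
  | TLo bool | TL bool | NC bool | NBo | CC | Inc | IncB | Fin1 | Fin2 | Fin3
  | Run pidt nat | IR1 pidt nat | IR2 pidt nat | IRb pidt nat

fun prog :: "pidt \<Rightarrow> 's ins list" where
  "prog (PInit s) = [Emit (TBit False), Inter, Emit (TBit True), Emit TComma, Emit TFresh]
     @ (if s then [Emit (TBit True)] else []) @
     [Emit TComma, Emit (TBit False), Inter, Emit (TBit False), Emit (TBit s), Copy,
      Emit (TBit True), Emit TComma, Skip]"
| "prog (PFin s) = [Emit (TBit False), Inter, Emit (TBit False), Emit (TBit s), Copy,
      Emit (TBit True), Emit TComma, Emit TFresh, Emit (TBit s), Emit (TBit True), Emit TComma,
      Emit (TBit False), Inter, Emit (TBit True), Emit TComma, Skip]"
| "prog (PTr s) = [Emit (TBit False), Inter, Emit (TBit False), Emit (TBit s), Copy,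
      Emit (TBit True), Emit TComma, Skip, Sym, Emit TComma, Skip,
      Emit (TBit False), Inter, Emit (TBit False), Emit (TBit s), Copy, Emit (TBit True),
      Emit TComma, Skip]"

fun cont :: "pidt \<Rightarrow> st" where
  "cont (PInit s) = IL s" | "cont (PFin s) = FL s" | "cont (PTr s) = TL s"

definition plen :: "pidt \<Rightarrow> nat" where "plen p = length (prog p :: unit ins list)"

lemma length_prog: "length (prog p) = plen p"
  by (cases p) (auto simp: plen_def)

fun dl :: "st \<Rightarrow> 's tok option \<Rightarrow> nat \<Rightarrow> st \<times> dir \<times> nat \<times> dir \<times> 's tok option" where
  "dl Init a w = (P1 0, Stay, w, Stay, Some TOpen)"
| "dl (P1 k) a w = (case a of None \<Rightarrow> (L 0, Lft, w, Stay, Some TComma)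
     | Some _ \<Rightarrow> if k < 3 then (P1 (Suc k), Stay, w, Stay, Some (TBit True))
                 else (P1 0, Rgt, w, Stay, Some (TBit True)))"
| "dl (L k) a w = (if a = Some TOpen then (if k < 3 then (L (Suc k), Lft, w, Stay, None)
        else (R0, Stay, 5, Stay, Some TOpen)) else (L 0, Lft, w, Stay, None))"
| "dl R0 a w = (CS, Rgt, w, Stay, None)"
| "dl CS a w = (if a = Some TClose then (Fin1, Stay, w, Stay, Some TClose)
        else (NI False, Rgt, w, Stay, None))"
| "dl (NI s) a w = (IL s, Rgt, w, Stay, None)"
| "dl (IL s) a w = (if a = Some TClose then (FLo s, Rgt, w, Stay, None)
        else (Run (PInit s) 0, Stay, w, Stay, None))"
| "dl (FLo s) a w = (FL s, Rgt, w, Stay, None)"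
| "dl (FL s) a w = (if a = Some TClose then (TLo s, Rgt, w, Stay, None)
        else (Run (PFin s) 0, Stay, w, Stay, None))"
| "dl (TLo s) a w = (TL s, Rgt, w, Stay, None)"
| "dl (TL s) a w = (if a = Some TClose then (NC s, Rgt, w, Stay, None)
        else (Run (PTr s) 0, Stay, w, Stay, None))"
| "dl (NC s) a w = (if s then CC else NBo, Rgt, w, Stay, None)"
| "dl NBo a w = (NI True, Rgt, w, Stay, None)"
| "dl CC a w = (Inc, Rgt, w, Rgt, None)"
| "dl Inc a w = (if w = 2 then (Inc, Stay, 1, Rgt, None) else (IncB, Stay, 2, Lft, None))"
| "dl IncB a w = (if w = 5 then (CS, Stay, w, Stay, None) else (IncB, Stay, w, Lft, None))"
| "dl Fin1 a w = (Fin2, Stay, w, Stay, Some TComma)"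
| "dl Fin2 a w = (Fin3, Stay, w, Stay, Some TComma)"
| "dl Fin3 a w = (Halt, Stay, w, Stay, Some TClose)"
| "dl Halt a w = (Halt, Stay, w, Stay, None)"
| "dl (Run p pc) a w = (if pc < plen p then (case prog p ! pc of
      Emit t \<Rightarrow> (Run p (Suc pc), Stay, w, Stay, Some t)
    | Inter \<Rightarrow> (IR1 p pc, Stay, w, Rgt, None)
    | Copy \<Rightarrow> (case a of Some (TBit b) \<Rightarrow> (Run p pc, Rgt, w, Stay, Some (TBit b))
                | _ \<Rightarrow> (Run p (Suc pc), Stay, w, Stay, None))
    | Skip \<Rightarrow> (Run p (Suc pc), Rgt, w, Stay, None)
    | Sym \<Rightarrow> (case a of Some (TSym c) \<Rightarrow> (Run p (Suc pc), Rgt, w, Stay, Some (TSym c))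
                | _ \<Rightarrow> (Run p (Suc pc), Rgt, w, Stay, None)))
    else (cont p, Stay, w, Stay, None))"
| "dl (IR1 p pc) a w = (if w = 1 \<or> w = 2 then (IR2 p pc, Stay, w, Stay, Some (TBit True))
        else (IRb p pc, Stay, w, Lft, None))"
| "dl (IR2 p pc) a w = (IR1 p pc, Stay, w, Rgt, Some (TBit (w = 2)))"
| "dl (IRb p pc) a w = (if w = 5 then (Run p (Suc pc), Stay, w, Stay, None)
        else (IRb p pc, Stay, w, Lft, None))"

definition allp :: "pidt list" where
  "allp = [PInit False, PInit True, PFin False, PFin True, PTr False, PTr True]"

lemma in_allp: "p \<in> set allp"
  by (cases p) (auto simp: allp_def)

definition pst :: "pidt \<Rightarrow> st list" where
  "pst p = map (Run p) [0..<Suc (plen p)] @ map (IR1 p) [0..<plen p]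
       @ map (IR2 p) [0..<plen p] @ map (IRb p) [0..<plen p]"

definition all_st :: "st list" where
  "all_st = [Init, Halt] @ map P1 [0..<4] @ map L [0..<4] @
    [R0, CS, NBo, CC, Inc, IncB, Fin1, Fin2, Fin3] @
    concat (map (\<lambda>s. [NI s, IL s, FLo s, FL s, TLo s, TL s, NC s]) [False, True]) @
    concat (map pst allp)"

fun valid :: "st \<Rightarrow> bool" where
  "valid (P1 k) = (k < 4)"
| "valid (L k) = (k < 4)"
| "valid (Run p pc) = (pc \<le> plen p)"
| "valid (IR1 p pc) = (pc < plen p)"
| "valid (IR2 p pc) = (pc < plen p)"
| "valid (IRb p pc) = (pc < plen p)"
| "valid _ = True"

lemma sub_all: "set (pst p) \<subseteq> set all_st"
proof -
  have "set (pst p) \<subseteq> set (concat (map pst allp))"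
    using in_allp[of p] by auto
  then show ?thesis unfolding all_st_def by auto
qed

lemma valid_all_st: "valid s \<Longrightarrow> s \<in> set all_st"
proof (cases s)
  case (Run p pc)
  assume "valid s" then show ?thesis using sub_all[of p, unfolded pst_def] Run
    by (cases "pc = plen p") (auto simp: image_subset_iff)
next
  case (IR1 p pc)
  assume "valid s" then show ?thesis using sub_all[of p, unfolded pst_def] IR1 by auto
next
  case (IR2 p pc)
  assume "valid s" then show ?thesis using sub_all[of p, unfolded pst_def] IR2 by auto
next
  case (IRb p pc)
  assume "valid s" then show ?thesis using sub_all[of p, unfolded pst_def] IRb by auto
qed (auto simp: all_st_def)


lemma valid_cont[simp]: "valid (cont p)" by (cases p) auto

lemma valid_dl: "valid s \<Longrightarrow> valid (fst (dl s a w))"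
  by (cases s) (auto split: ins.split option.split tok.split simp: length_prog)

lemma dl_w: "w < 6 \<Longrightarrow> fst (snd (snd (dl s a w))) < 6"
  by (cases s) (auto split: ins.split option.split tok.split)

fun idx :: "'a list \<Rightarrow> 'a \<Rightarrow> nat" where
  "idx [] s = 0"
| "idx (y # ys) s = (if y = s then 0 else Suc (idx ys s))"

lemma idx_le: "idx l s \<le> length l"
  by (induction l) auto

lemma idx_nth: "s \<in> set l \<Longrightarrow> idx l s < length l \<and> l ! idx l s = s"
  by (induction l) auto

definition st_num :: "st \<Rightarrow> nat" where "st_num s = idx all_st s"

definition tdelta :: "nat \<Rightarrow> 's tok option \<Rightarrow> nat \<Rightarrow> nat \<times> dir \<times> nat \<times> dir \<times> 's tok option" where
  "tdelta q a w = (if q < length all_st then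
     (case dl (all_st ! q) a w of (s', d1, w', d2, ob) \<Rightarrow> (st_num s', d1, w', d2, ob))
     else (0, Stay, 0, Stay, None))"

definition MM :: "('s tok, 's tok) ltm" where
  "MM = LTM (Suc (length all_st)) 6 tdelta"

lemma MM_wf: "tm_wf MM"
proof -
  have "length all_st \<ge> 2" by (simp add: all_st_def)
  moreover have h: "\<And>q a w. w < 6 \<Longrightarrow> (case tdelta q a w of (q', _, s, _, _) \<Rightarrow>
      q' < Suc (length all_st) \<and> s < 6)"
  proof -
    fix q a w assume w: "(w::nat) < 6"
    show "case tdelta q a w of (q', _, s, _, _) \<Rightarrow> q' < Suc (length all_st) \<and> s < 6"
      using dl_w[OF w, of "all_st ! q" a] idx_le[of all_st]
      by (auto simp: tdelta_def st_num_def split: prod.split) (metis le_imp_less_Suc)+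
  qed
  ultimately show ?thesis unfolding tm_wf_def MM_def ltm.sel
    apply (intro conjI allI impI)
      apply simp
     apply simp
    apply (rule h)
    by assumption
qed

type_synonym 's acfg = "st \<times> nat \<times> (nat \<Rightarrow> nat) \<times> nat \<times> 's tok list"

definition rd :: "'s tok list \<Rightarrow> nat \<Rightarrow> 's tok option" where
  "rd x ih = (if ih < length x then Some (x ! ih) else None)"

definition astep :: "'s tok list \<Rightarrow> 's acfg \<Rightarrow> 's acfg" where
  "astep x c = (case c of (s, ih, wk, wh, out) \<Rightarrow>
     if s = Halt then c else
     (case dl s (rd x ih) (wk wh) of (s', di, w', dw, ob) \<Rightarrow>
       (s', min (move di ih) (length x), wk(wh := w'), move dw wh,
        out @ (case ob of None \<Rightarrow> [] | Some b \<Rightarrow> [b]))))"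

definition encc :: "'s acfg \<Rightarrow> 's tok config" where
  "encc c = (case c of (s, r) \<Rightarrow> (st_num s, r))"

lemma st_num_Halt: "st_num Halt = 1"
  by (simp add: st_num_def all_st_def)
lemma st_num_Init: "st_num Init = 0"
  by (simp add: st_num_def all_st_def)

lemma sim: "valid s \<Longrightarrow> tm_step MM x (encc (s, r)) = encc (astep x (s, r)) \<and> valid (fst (astep x (s, r)))"
proof -
  assume v: "valid s"
  then have m: "s \<in> set all_st" by (rule valid_all_st)
  from idx_nth[OF m] have i: "st_num s < length all_st" "all_st ! st_num s = s"
    by (auto simp: st_num_def)
  have h1: "all_st ! 1 = Halt" by (simp add: all_st_def)
  have ne: "(st_num s = 1) = (s = Halt)" using i h1 st_num_Halt by metis
  obtain ih wk wh out where r: "r = (ih, wk, wh, out)" by (cases r) auto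
  show ?thesis
    using i ne v valid_dl[OF v, of "rd x ih" "wk wh"]
    by (auto simp: r tm_step_def encc_def astep_def MM_def tdelta_def rd_def split: prod.split)
qed



definition whd :: "'s acfg \<Rightarrow> nat" where "whd c = fst (snd (snd (snd c)))"

inductive rch :: "'s tok list \<Rightarrow> nat \<Rightarrow> 's acfg \<Rightarrow> 's acfg \<Rightarrow> bool" for x B where
  rrefl: "whd c \<le> B \<Longrightarrow> rch x B c c"
| rstep: "whd c \<le> B \<Longrightarrow> rch x B (astep x c) c' \<Longrightarrow> rch x B c c'"

lemma rch_trans: "rch x B c c' \<Longrightarrow> rch x B c' c'' \<Longrightarrow> rch x B c c''"
  by (induction rule: rch.induct) (auto intro: rch.intros)

lemma rch_steps: "rch x B c c' \<Longrightarrow> \<exists>k. (astep x ^^ k) c = c' \<and> (\<forall>j\<le>k. whd ((astep x ^^ j) c) \<le> B)"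
proof (induction rule: rch.induct)
  case (rrefl c) then show ?case by (intro exI[of _ 0]) auto
next
  case (rstep c c')
  then obtain k where k: "(astep x ^^ k) (astep x c) = c'" "\<forall>j\<le>k. whd ((astep x ^^ j) (astep x c)) \<le> B"
    by blast
  show ?case
  proof (intro exI[of _ "Suc k"] conjI allI impI)
    show "(astep x ^^ Suc k) c = c'" using k by (simp add: funpow_Suc_right del: funpow.simps)
  next
    fix j assume "j \<le> Suc k"
    then show "whd ((astep x ^^ j) c) \<le> B"
      using k rstep.hyps(1) by (cases j) (auto simp: funpow_Suc_right simp del: funpow.simps)
  qed
qed

lemma astep_halt: "astep x (Halt, r) = (Halt, r)"
  by (cases r) (auto simp: astep_def)

lemma funpow_halt: "(astep x ^^ n) (Halt, r) = (Halt, r)"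
  by (induction n) (auto simp: astep_halt)

definition cinit :: "'s acfg" where "cinit = (Init, 0, \<lambda>_. 0, 0, [])"

lemma conf_sim: "tm_conf MM x t = encc ((astep x ^^ t) cinit) \<and> valid (fst ((astep x ^^ t) cinit))"
proof (induction t)
  case 0 then show ?case by (simp add: tm_conf_def tm_init_def encc_def cinit_def st_num_Init)
next
  case (Suc t)
  obtain s r where c: "(astep x ^^ t) cinit = (s, r)" by (cases "(astep x ^^ t) cinit") auto
  from Suc c sim[of s x r] show ?case by (simp add: tm_conf_def)
qed

lemma rch_final:
  assumes "rch x B cinit (Halt, ih, wk, wh, out)"
  shows "tm_computes MM x out \<and> (\<forall>t. conf_whead (tm_conf MM x t) \<le> B)"
proof -
  from rch_steps[OF assms] obtain k where k: "(astep x ^^ k) cinit = (Halt, ih, wk, wh, out)"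
    "\<forall>j\<le>k. whd ((astep x ^^ j) cinit) \<le> B" by blast
  have "tm_computes MM x out"
    unfolding tm_computes_def using conf_sim[of x k] k(1)
    by (intro exI[of _ k]) (simp add: encc_def st_num_Halt conf_state_def conf_out_def)
  moreover have "conf_whead (tm_conf MM x t) \<le> B" for t
  proof (cases "t \<le> k")
    case True then show ?thesis using conf_sim[of x t] k(2)
      by (cases "(astep x ^^ t) cinit") (auto simp: encc_def conf_whead_def whd_def)
  next
    case False
    then have "(astep x ^^ t) cinit = (astep x ^^ (t - k)) ((astep x ^^ k) cinit)"
    proof -
      have "t = (t - k) + k" using False by simp
      then show ?thesis by (metis funpow_add comp_apply)
    qed
    also have "\<dots> = (Halt, ih, wk, wh, out)" using k(1) funpow_halt by simp
    finally show ?thesis using conf_sim[of x t] k(2)[rule_format, of k] k(1)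
      by (auto simp: encc_def conf_whead_def whd_def)
  qed
  ultimately show ?thesis by blast
qed



fun nbits :: "nat \<Rightarrow> bool list" where
  "nbits n = (if n = 0 then [] else odd n # nbits (n div 2))"
declare nbits.simps[simp del] enc_nat.simps[simp del]

lemma enc_nat_nbits: "enc_nat n = map TBit (nbits n)"
  by (induction n rule: nbits.induct) (subst enc_nat.simps, subst nbits.simps, simp)

fun incb :: "bool list \<Rightarrow> bool list" where
  "incb [] = [True]"
| "incb (False # bs) = True # bs"
| "incb (True # bs) = False # incb bs"

lemma nbits_Suc: "nbits (Suc n) = incb (nbits n)"
proof (induction n rule: less_induct)
  case (less n)
  show ?case
  proof (cases "n = 0")
    case True then show ?thesis by (simp add: nbits.simps)
  next
    case False
    show ?thesis
    proof (cases "even n")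
      case True
      then have "Suc n div 2 = n div 2" by presburger
      then show ?thesis using True False by (simp add: nbits.simps[of "Suc n"] nbits.simps[of n])
    next
      case odd: False
      then have d: "Suc n div 2 = Suc (n div 2)" by presburger
      have "n div 2 < n" using False by simp
      then have "nbits (Suc (n div 2)) = incb (nbits (n div 2))" by (rule less.IH)
      then show ?thesis using odd False d by (simp add: nbits.simps[of "Suc n"] nbits.simps[of n])
    qed
  qed
qed

definition wt :: "bool list \<Rightarrow> nat \<Rightarrow> nat" where
  "wt bs j = (if j = 0 then 5 else if j \<le> length bs then (if bs ! (j - 1) then 2 else 1) else 0)"

definition ilv :: "bool list \<Rightarrow> bool list" where
  "ilv bs = concat (map (\<lambda>b. [True, b]) bs)"

lemma ilv_simps[simp]: "ilv [] = []" "ilv (b # bs) = True # b # ilv bs"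
  by (auto simp: ilv_def)

lemma wt0[simp]: "wt bs 0 = 5" by (simp add: wt_def)

declare fun_upd_idem[simp]

lemma rstep': "wh \<le> B \<Longrightarrow> rch x B (astep x (s, ih, wk, wh, out)) c' \<Longrightarrow> rch x B (s, ih, wk, wh, out) c'"
  by (rule rstep) (auto simp: whd_def)

lemma inter_back: "j \<le> length bs \<Longrightarrow> ih \<le> length x \<Longrightarrow> length bs + 1 \<le> B \<Longrightarrow>
  rch x B (Run p (Suc pc), ih, wt bs, 0, out) c' \<Longrightarrow> rch x B (IRb p pc, ih, wt bs, j, out) c'"
proof (induction j)
  case 0 then show ?case
    by (intro rstep') (auto simp: astep_def)
next
  case (Suc j)
  have "wt bs (Suc j) \<noteq> 5" using Suc.prems by (auto simp: wt_def)
  with Suc show ?case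
    by (intro rstep') (auto simp: astep_def min_absorb1)
qed

lemma inter_fwd: "1 \<le> j \<Longrightarrow> j \<le> length bs + 1 \<Longrightarrow> ih \<le> length x \<Longrightarrow> length bs + 1 \<le> B \<Longrightarrow>
  rch x B (Run p (Suc pc), ih, wt bs, 0, out @ map TBit (ilv (drop (j - 1) bs))) c' \<Longrightarrow> rch x B (IR1 p pc, ih, wt bs, j, out) c'"
proof (induction "length bs + 1 - j" arbitrary: j out)
  case 0
  then have j: "j = length bs + 1" by simp
  have "wt bs j = 0" using j by (simp add: wt_def)
  then show ?case using 0 j
    by (intro rstep') (auto simp: astep_def min_absorb1 intro!: inter_back)
next
  case (Suc k)
  then have jl: "j \<le> length bs" by simp
  let ?b = "bs ! (j - 1)"
  have w: "wt bs j = (if ?b then 2 else 1)" using jl Suc.prems by (simp add: wt_def)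
  have d: "drop (j - 1) bs = ?b # drop j bs"
    using jl Suc.prems by (metis Cons_nth_drop_Suc Suc_diff_1 le_eq_less_or_eq less_Suc_eq_le less_imp_diff_less less_one not_le)
  have IH: "rch x B (IR1 p pc, ih, wt bs, Suc j, out @ [TBit True, TBit ?b]) c'"
    using Suc.hyps(1)[of "Suc j" "out @ [TBit True, TBit ?b]"] Suc.prems Suc.hyps(2) jl d by simp
  show ?case
    apply (rule rstep') using Suc.prems apply simp
    apply (simp add: astep_def w min_absorb1 Suc.prems)
    apply (rule rstep') using Suc.prems jl apply simp
    using IH by (cases ?b) (simp_all add: astep_def w min_absorb1 Suc.prems)
qed

lemma r_inter: "(prog p ! pc :: 's ins) = Inter \<Longrightarrow> pc < plen p \<Longrightarrow> ih \<le> length x \<Longrightarrow> length bs + 1 \<le> B \<Longrightarrow>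
  rch x B (Run p (Suc pc), ih, wt bs, 0, out @ map TBit (ilv bs)) c' \<Longrightarrow> rch (x::'s tok list) B (Run p pc, ih, wt bs, 0, out) c'"
  by (intro rstep') (auto simp: astep_def min_absorb1 intro!: inter_fwd)

lemma r_emit: "(prog p ! pc :: 's ins) = Emit t \<Longrightarrow> pc < plen p \<Longrightarrow> ih \<le> length x \<Longrightarrow> wh \<le> B \<Longrightarrow>
  rch x B (Run p (Suc pc), ih, wk, wh, out @ [etok (prog p ! pc)]) c' \<Longrightarrow> rch (x::'s tok list) B (Run p pc, ih, wk, wh, out) c'"
  by (intro rstep') (auto simp: astep_def min_absorb1)

lemma r_skip: "(prog p ! pc :: 's ins) = Skip \<Longrightarrow> pc < plen p \<Longrightarrow> ih < length x \<Longrightarrow> wh \<le> B \<Longrightarrow>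
  rch x B (Run p (Suc pc), Suc ih, wk, wh, out) c' \<Longrightarrow> rch (x::'s tok list) B (Run p pc, ih, wk, wh, out) c'"
  by (intro rstep') (auto simp: astep_def min_absorb1)

lemma r_sym: "(prog p ! pc :: 's ins) = Sym \<Longrightarrow> pc < plen p \<Longrightarrow> ih < length x \<Longrightarrow> x ! ih = TSym a \<Longrightarrow> wh \<le> B \<Longrightarrow>
  rch x B (Run p (Suc pc), Suc ih, wk, wh, out @ [TSym a]) c' \<Longrightarrow> rch (x::'s tok list) B (Run p pc, ih, wk, wh, out) c'"
  by (intro rstep') (auto simp: astep_def min_absorb1 rd_def)

lemma r_end: "pc = plen p \<Longrightarrow> ih \<le> length x \<Longrightarrow> wh \<le> B \<Longrightarrow>
  rch x B (cont p, ih, wk, wh, out) c' \<Longrightarrow> rch (x::'s tok list) B (Run p pc, ih, wk, wh, out) c'"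
  by (intro rstep') (auto simp: astep_def min_absorb1)

lemma r_copy0: "(prog p ! pc :: 's ins) = Copy \<Longrightarrow> pc < plen p \<Longrightarrow> x = pre @ map TBit bs @ TComma # post \<Longrightarrow> wh \<le> B \<Longrightarrow>
  rch x B (Run p (Suc pc), length pre + length bs, wk, wh, out @ map TBit bs) c' \<Longrightarrow>
  rch (x::'s tok list) B (Run p pc, length pre, wk, wh, out) c'"
proof (induction bs arbitrary: pre out)
  case Nil then show ?case
    by (intro rstep') (auto simp: astep_def min_absorb1 rd_def)
next
  case (Cons b bs)
  have IH: "rch x B (Run p pc, length (pre @ [TBit b]), wk, wh, out @ [TBit b]) c'"
    using Cons.prems by (intro Cons.IH) auto
  show ?case using Cons.prems IH
    by (intro rstep') (auto simp: astep_def min_absorb1 rd_def)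
qed

lemma r_copy: "(prog p ! pc :: 's ins) = Copy \<Longrightarrow> pc < plen p \<Longrightarrow> x = pre @ map TBit bs @ TComma # post \<Longrightarrow>
  ih = length pre \<Longrightarrow> wh \<le> B \<Longrightarrow>
  rch x B (Run p (Suc pc), ih + length bs, wk, wh, out @ map TBit bs) c' \<Longrightarrow>
  rch (x::'s tok list) B (Run p pc, ih, wk, wh, out) c'"
  using r_copy0 by blast



definition Ebl :: "nat \<Rightarrow> bool list" where "Ebl i = False # ilv (nbits i) @ [True]"
definition Nbl :: "nat \<Rightarrow> bool \<Rightarrow> nat \<Rightarrow> bool list" where
  "Nbl i s p = False # ilv (nbits i) @ [False, s] @ nbits p @ [True]"

definition init_out :: "nat \<Rightarrow> bool \<Rightarrow> nat \<Rightarrow> 's tok list" where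
  "init_out i s p = map TBit (Ebl i) @ [TComma, TFresh] @ (if s then [TBit True] else []) @ [TComma]
     @ map TBit (Nbl i s p) @ [TComma]"
definition fin_out :: "nat \<Rightarrow> bool \<Rightarrow> nat \<Rightarrow> 's tok list" where
  "fin_out i s f = map TBit (Nbl i s f) @ [TComma, TFresh, TBit s, TBit True, TComma] @ map TBit (Ebl i) @ [TComma]"
definition tr_out :: "nat \<Rightarrow> bool \<Rightarrow> nat \<Rightarrow> 's \<Rightarrow> nat \<Rightarrow> 's tok list" where
  "tr_out i s p a q = map TBit (Nbl i s p) @ [TComma, TSym a, TComma] @ map TBit (Nbl i s q) @ [TComma]"

lemma pinit_False: "x = pre @ map TBit (nbits p) @ TComma # post \<Longrightarrow> length (nbits i) + 1 \<le> B \<Longrightarrow>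
  rch x B (IL False, Suc (length pre + length (nbits p)), wt (nbits i), 0, out @ init_out i False p) c' \<Longrightarrow>
  rch x B (IL False, length pre, wt (nbits i), 0, out) c'"
proof -
  assume x: "x = pre @ map TBit (nbits p) @ TComma # post" and b: "length (nbits i) + 1 \<le> B"
    and r: "rch x B (IL False, Suc (length pre + length (nbits p)), wt (nbits i), 0, out @ init_out i False p) c'"
  have rd: "rd x (length pre) \<noteq> Some TClose" using x by (cases "nbits p") (auto simp: rd_def nth_append)
  show ?thesis
  apply (rule rstep') apply simp
  apply (simp add: astep_def rd)
  apply (rule r_emit) apply (simp_all add: plen_def x)
  apply (rule r_inter) apply (simp_all add: plen_def x b[simplified])
  apply (rule r_emit) apply (simp_all add: plen_def x)
  apply (rule r_emit) apply (simp_all add: plen_def x)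
  apply (rule r_emit) apply (simp_all add: plen_def x)
  apply (rule r_emit) apply (simp_all add: plen_def x)
  apply (rule r_emit) apply (simp_all add: plen_def x)
  apply (rule r_inter) apply (simp_all add: plen_def x b[simplified])
  apply (rule r_emit) apply (simp_all add: plen_def x)
  apply (rule r_emit) apply (simp_all add: plen_def x)
  apply (rule r_copy[where pre="pre" and bs="nbits p" and post="post"]) apply (simp_all add: plen_def x)
  apply (rule r_emit) apply (simp_all add: plen_def x)
  apply (rule r_emit) apply (simp_all add: plen_def x)
  apply (rule r_skip) apply (simp_all add: plen_def x)
  apply (rule r_end) apply (simp_all add: plen_def x)
  using r x by (simp add: init_out_def Ebl_def Nbl_def)
qed
lemma pinit_True: "x = pre @ map TBit (nbits p) @ TComma # post \<Longrightarrow> length (nbits i) + 1 \<le> B \<Longrightarrow>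
  rch x B (IL True, Suc (length pre + length (nbits p)), wt (nbits i), 0, out @ init_out i True p) c' \<Longrightarrow>
  rch x B (IL True, length pre, wt (nbits i), 0, out) c'"
proof -
  assume x: "x = pre @ map TBit (nbits p) @ TComma # post" and b: "length (nbits i) + 1 \<le> B"
    and r: "rch x B (IL True, Suc (length pre + length (nbits p)), wt (nbits i), 0, out @ init_out i True p) c'"
  have rd: "rd x (length pre) \<noteq> Some TClose" using x by (cases "nbits p") (auto simp: rd_def nth_append)
  show ?thesis
  apply (rule rstep') apply simp
  apply (simp add: astep_def rd)
  apply (rule r_emit) apply (simp_all add: plen_def x)
  apply (rule r_inter) apply (simp_all add: plen_def x b[simplified])
  apply (rule r_emit) apply (simp_all add: plen_def x)
  apply (rule r_emit) apply (simp_all add: plen_def x)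
  apply (rule r_emit) apply (simp_all add: plen_def x)
  apply (rule r_emit) apply (simp_all add: plen_def x)
  apply (rule r_emit) apply (simp_all add: plen_def x)
  apply (rule r_emit) apply (simp_all add: plen_def x)
  apply (rule r_inter) apply (simp_all add: plen_def x b[simplified])
  apply (rule r_emit) apply (simp_all add: plen_def x)
  apply (rule r_emit) apply (simp_all add: plen_def x)
  apply (rule r_copy[where pre="pre" and bs="nbits p" and post="post"]) apply (simp_all add: plen_def x)
  apply (rule r_emit) apply (simp_all add: plen_def x)
  apply (rule r_emit) apply (simp_all add: plen_def x)
  apply (rule r_skip) apply (simp_all add: plen_def x)
  apply (rule r_end) apply (simp_all add: plen_def x)
  using r x by (simp add: init_out_def Ebl_def Nbl_def)
qed

lemma pfin_False: "x = pre @ map TBit (nbits p) @ TComma # post \<Longrightarrow> length (nbits i) + 1 \<le> B \<Longrightarrow>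
  rch x B (FL False, Suc (length pre + length (nbits p)), wt (nbits i), 0, out @ fin_out i False p) c' \<Longrightarrow>
  rch x B (FL False, length pre, wt (nbits i), 0, out) c'"
proof -
  assume x: "x = pre @ map TBit (nbits p) @ TComma # post" and b: "length (nbits i) + 1 \<le> B"
    and r: "rch x B (FL False, Suc (length pre + length (nbits p)), wt (nbits i), 0, out @ fin_out i False p) c'"
  have rd: "rd x (length pre) \<noteq> Some TClose" using x by (cases "nbits p") (auto simp: rd_def nth_append)
  show ?thesis
  apply (rule rstep') apply simp
  apply (simp add: astep_def rd)
  apply (rule r_emit) apply (simp_all add: plen_def x)
  apply (rule r_inter) apply (simp_all add: plen_def x b[simplified])
  apply (rule r_emit) apply (simp_all add: plen_def x)
  apply (rule r_emit) apply (simp_all add: plen_def x)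
  apply (rule r_copy[where pre="pre" and bs="nbits p" and post="post"]) apply (simp_all add: plen_def x)
  apply (rule r_emit) apply (simp_all add: plen_def x)
  apply (rule r_emit) apply (simp_all add: plen_def x)
  apply (rule r_emit) apply (simp_all add: plen_def x)
  apply (rule r_emit) apply (simp_all add: plen_def x)
  apply (rule r_emit) apply (simp_all add: plen_def x)
  apply (rule r_emit) apply (simp_all add: plen_def x)
  apply (rule r_emit) apply (simp_all add: plen_def x)
  apply (rule r_inter) apply (simp_all add: plen_def x b[simplified])
  apply (rule r_emit) apply (simp_all add: plen_def x)
  apply (rule r_emit) apply (simp_all add: plen_def x)
  apply (rule r_skip) apply (simp_all add: plen_def x)
  apply (rule r_end) apply (simp_all add: plen_def x)
  using r x by (simp add: fin_out_def Ebl_def Nbl_def)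
qed

lemma ptr_False: "x = pre @ map TBit (nbits p) @ TComma # TSym a # TComma # map TBit (nbits q) @ TComma # post \<Longrightarrow>
  length (nbits i) + 1 \<le> B \<Longrightarrow>
  rch x B (TL False, length pre + length (nbits p) + length (nbits q) + 4, wt (nbits i), 0, out @ tr_out i False p a q) c' \<Longrightarrow>
  rch x B (TL False, length pre, wt (nbits i), 0, out) c'"
proof -
  assume x: "x = pre @ map TBit (nbits p) @ TComma # TSym a # TComma # map TBit (nbits q) @ TComma # post"
    and b: "length (nbits i) + 1 \<le> B"
    and r: "rch x B (TL False, length pre + length (nbits p) + length (nbits q) + 4, wt (nbits i), 0, out @ tr_out i False p a q) c'"
  have rd: "rd x (length pre) \<noteq> Some TClose" using x by (cases "nbits p") (auto simp: rd_def nth_append)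
  show ?thesis
  apply (rule rstep') apply simp
  apply (simp add: astep_def rd)
  apply (rule r_emit) apply (simp_all add: plen_def x)
  apply (rule r_inter) apply (simp_all add: plen_def x b[simplified])
  apply (rule r_emit) apply (simp_all add: plen_def x)
  apply (rule r_emit) apply (simp_all add: plen_def x)
  apply (rule r_copy[where pre="pre" and bs="nbits p" and post="TSym a # TComma # map TBit (nbits q) @ TComma # post"]) apply (simp_all add: plen_def x)
  apply (rule r_emit) apply (simp_all add: plen_def x)
  apply (rule r_emit) apply (simp_all add: plen_def x)
  apply (rule r_skip) apply (simp_all add: plen_def x)
  apply (rule r_sym) apply (simp_all add: plen_def x nth_append)
  apply (rule r_emit) apply (simp_all add: plen_def x)
  apply (rule r_skip) apply (simp_all add: plen_def x)
  apply (rule r_emit) apply (simp_all add: plen_def x)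
  apply (rule r_inter) apply (simp_all add: plen_def x b[simplified])
  apply (rule r_emit) apply (simp_all add: plen_def x)
  apply (rule r_emit) apply (simp_all add: plen_def x)
  apply (rule r_copy[where pre="pre @ map TBit (nbits p) @ [TComma, TSym a, TComma]" and bs="nbits q" and post="post"]) apply (simp_all add: plen_def x)
  apply (rule r_emit) apply (simp_all add: plen_def x)
  apply (rule r_emit) apply (simp_all add: plen_def x)
  apply (rule r_skip) apply (simp_all add: plen_def x)
  apply (rule r_end) apply (simp_all add: plen_def x)
  using r x by (simp add: tr_out_def Ebl_def Nbl_def eval_nat_numeral)
qed

lemma pfin_True: "x = pre @ map TBit (nbits p) @ TComma # post \<Longrightarrow> length (nbits i) + 1 \<le> B \<Longrightarrow>
  rch x B (FL True, Suc (length pre + length (nbits p)), wt (nbits i), 0, out @ fin_out i True p) c' \<Longrightarrow>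
  rch x B (FL True, length pre, wt (nbits i), 0, out) c'"
proof -
  assume x: "x = pre @ map TBit (nbits p) @ TComma # post" and b: "length (nbits i) + 1 \<le> B"
    and r: "rch x B (FL True, Suc (length pre + length (nbits p)), wt (nbits i), 0, out @ fin_out i True p) c'"
  have rd: "rd x (length pre) \<noteq> Some TClose" using x by (cases "nbits p") (auto simp: rd_def nth_append)
  show ?thesis
  apply (rule rstep') apply simp
  apply (simp add: astep_def rd)
  apply (rule r_emit) apply (simp_all add: plen_def x)
  apply (rule r_inter) apply (simp_all add: plen_def x b[simplified])
  apply (rule r_emit) apply (simp_all add: plen_def x)
  apply (rule r_emit) apply (simp_all add: plen_def x)
  apply (rule r_copy[where pre="pre" and bs="nbits p" and post="post"]) apply (simp_all add: plen_def x)
  apply (rule r_emit) apply (simp_all add: plen_def x)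
  apply (rule r_emit) apply (simp_all add: plen_def x)
  apply (rule r_emit) apply (simp_all add: plen_def x)
  apply (rule r_emit) apply (simp_all add: plen_def x)
  apply (rule r_emit) apply (simp_all add: plen_def x)
  apply (rule r_emit) apply (simp_all add: plen_def x)
  apply (rule r_emit) apply (simp_all add: plen_def x)
  apply (rule r_inter) apply (simp_all add: plen_def x b[simplified])
  apply (rule r_emit) apply (simp_all add: plen_def x)
  apply (rule r_emit) apply (simp_all add: plen_def x)
  apply (rule r_skip) apply (simp_all add: plen_def x)
  apply (rule r_end) apply (simp_all add: plen_def x)
  using r x by (simp add: fin_out_def Ebl_def Nbl_def)
qed

lemma ptr_True: "x = pre @ map TBit (nbits p) @ TComma # TSym a # TComma # map TBit (nbits q) @ TComma # post \<Longrightarrow>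
  length (nbits i) + 1 \<le> B \<Longrightarrow>
  rch x B (TL True, length pre + length (nbits p) + length (nbits q) + 4, wt (nbits i), 0, out @ tr_out i True p a q) c' \<Longrightarrow>
  rch x B (TL True, length pre, wt (nbits i), 0, out) c'"
proof -
  assume x: "x = pre @ map TBit (nbits p) @ TComma # TSym a # TComma # map TBit (nbits q) @ TComma # post"
    and b: "length (nbits i) + 1 \<le> B"
    and r: "rch x B (TL True, length pre + length (nbits p) + length (nbits q) + 4, wt (nbits i), 0, out @ tr_out i True p a q) c'"
  have rd: "rd x (length pre) \<noteq> Some TClose" using x by (cases "nbits p") (auto simp: rd_def nth_append)
  show ?thesis
  apply (rule rstep') apply simp
  apply (simp add: astep_def rd)
  apply (rule r_emit) apply (simp_all add: plen_def x)
  apply (rule r_inter) apply (simp_all add: plen_def x b[simplified])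
  apply (rule r_emit) apply (simp_all add: plen_def x)
  apply (rule r_emit) apply (simp_all add: plen_def x)
  apply (rule r_copy[where pre="pre" and bs="nbits p" and post="TSym a # TComma # map TBit (nbits q) @ TComma # post"]) apply (simp_all add: plen_def x)
  apply (rule r_emit) apply (simp_all add: plen_def x)
  apply (rule r_emit) apply (simp_all add: plen_def x)
  apply (rule r_skip) apply (simp_all add: plen_def x)
  apply (rule r_sym) apply (simp_all add: plen_def x nth_append)
  apply (rule r_emit) apply (simp_all add: plen_def x)
  apply (rule r_skip) apply (simp_all add: plen_def x)
  apply (rule r_emit) apply (simp_all add: plen_def x)
  apply (rule r_inter) apply (simp_all add: plen_def x b[simplified])
  apply (rule r_emit) apply (simp_all add: plen_def x)
  apply (rule r_emit) apply (simp_all add: plen_def x)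
  apply (rule r_copy[where pre="pre @ map TBit (nbits p) @ [TComma, TSym a, TComma]" and bs="nbits q" and post="post"]) apply (simp_all add: plen_def x)
  apply (rule r_emit) apply (simp_all add: plen_def x)
  apply (rule r_emit) apply (simp_all add: plen_def x)
  apply (rule r_skip) apply (simp_all add: plen_def x)
  apply (rule r_end) apply (simp_all add: plen_def x)
  using r x by (simp add: tr_out_def Ebl_def Nbl_def eval_nat_numeral)
qed



lemma wt_upd_in: "j < length cs \<Longrightarrow> (wt cs)(Suc j := (if b then 2 else 1)) = wt (cs[j := b])"
  by (auto simp: wt_def fun_eq_iff nth_list_update)

lemma wt_upd_end: "(wt cs)(Suc (length cs) := 2) = wt (cs @ [True])"
  by (auto simp: wt_def fun_eq_iff nth_append)

lemma wt_val: "j < length cs \<Longrightarrow> wt cs (Suc j) = (if cs ! j then 2 else 1)"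
  by (simp add: wt_def)

lemma wt_end: "wt cs (Suc (length cs)) = 0"
  by (simp add: wt_def)

lemma incb_back: "m \<le> length cs \<Longrightarrow> ih \<le> length x \<Longrightarrow> length cs \<le> B \<Longrightarrow>
  rch x B (CS, ih, wt cs, 0, out) c' \<Longrightarrow> rch x B (IncB, ih, wt cs, m, out) c'"
proof (induction m)
  case 0 then show ?case by (intro rstep') (auto simp: astep_def)
next
  case (Suc m)
  have "wt cs (Suc m) \<noteq> 5" using Suc.prems by (auto simp: wt_val)
  with Suc show ?case by (intro rstep') (auto simp: astep_def min_absorb1)
qed

lemma length_incb: "length bs \<le> length (incb bs)" "length (incb bs) \<le> Suc (length bs)"
  by (induction bs rule: incb.induct) auto

lemma inc_go: "ih \<le> length x \<Longrightarrow> Suc (k + length bs) \<le> B \<Longrightarrow>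
  rch x B (CS, ih, wt (replicate k False @ incb bs), 0, out) c' \<Longrightarrow>
  rch x B (Inc, ih, wt (replicate k False @ bs), Suc k, out) c'"
proof (induction bs arbitrary: k)
  case Nil
  have e: "(wt (replicate k False))(Suc k := 2) = wt (replicate k False @ [True])"
    using wt_upd_end[of "replicate k False"] by simp
  show ?case using Nil
    by (intro rstep') (auto simp: astep_def min_absorb1 wt_end[of "replicate k False", simplified] e
       intro!: incb_back)
next
  case (Cons b bs)
  show ?case
  proof (cases b)
    case False
    have v: "wt (replicate k False @ False # bs) (Suc k) = 1" by (simp add: wt_val nth_append)
    have e: "(wt (replicate k False @ False # bs))(Suc k := 2) = wt (replicate k False @ True # bs)"
      using wt_upd_in[of k "replicate k False @ False # bs" True] by (simp add: list_update_append)
    show ?thesis using Cons.prems False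
      by (intro rstep') (auto simp: astep_def min_absorb1 v e intro!: incb_back)
  next
    case True
    have v: "wt (replicate k False @ True # bs) (Suc k) = 2" by (simp add: wt_val nth_append)
    have e: "(wt (replicate k False @ True # bs))(Suc k := Suc 0) = wt (replicate (Suc k) False @ bs)"
      using wt_upd_in[of k "replicate k False @ True # bs" False] by (simp add: list_update_append replicate_append_same[symmetric])
    have IH: "rch x B (Inc, ih, wt (replicate (Suc k) False @ bs), Suc (Suc k), out) c'"
      using Cons.prems True by (intro Cons.IH) (auto simp: replicate_append_same[symmetric])
    show ?thesis using Cons.prems True IH
      by (intro rstep') (auto simp: astep_def min_absorb1 v e)
  qed
qed



lemma pinit: "x = pre @ map TBit (nbits p) @ TComma # post \<Longrightarrow> length (nbits i) + 1 \<le> B \<Longrightarrow>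
  rch x B (IL s, Suc (length pre + length (nbits p)), wt (nbits i), 0, out @ init_out i s p) c' \<Longrightarrow>
  rch x B (IL s, length pre, wt (nbits i), 0, out) c'"
  by (cases s) (auto intro: pinit_False pinit_True)

lemma pfin: "x = pre @ map TBit (nbits p) @ TComma # post \<Longrightarrow> length (nbits i) + 1 \<le> B \<Longrightarrow>
  rch x B (FL s, Suc (length pre + length (nbits p)), wt (nbits i), 0, out @ fin_out i s p) c' \<Longrightarrow>
  rch x B (FL s, length pre, wt (nbits i), 0, out) c'"
  by (cases s) (auto intro: pfin_False pfin_True)

lemma ptr: "x = pre @ map TBit (nbits p) @ TComma # TSym a # TComma # map TBit (nbits q) @ TComma # post \<Longrightarrow>
  length (nbits i) + 1 \<le> B \<Longrightarrow>
  rch x B (TL s, length pre + length (nbits p) + length (nbits q) + 4, wt (nbits i), 0, out @ tr_out i s p a q) c' \<Longrightarrow>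
  rch x B (TL s, length pre, wt (nbits i), 0, out) c'"
  by (cases s) (auto intro: ptr_False ptr_True)

definition nel :: "nat \<Rightarrow> 's tok list" where "nel p = map TBit (nbits p) @ [TComma]"

lemma ilist: "(x :: 's tok list) = pre @ concat (map nel ps) @ TClose # post \<Longrightarrow> length (nbits i) + 1 \<le> B \<Longrightarrow>
  rch x B (FLo s, Suc (length pre + length (concat (map nel ps) :: 's tok list)), wt (nbits i), 0,
     out @ concat (map (init_out i s) ps)) c' \<Longrightarrow>
  rch x B (IL s, length pre, wt (nbits i), 0, out) c'"
proof (induction ps arbitrary: pre out)
  case Nil
  then show ?case by (intro rstep') (auto simp: astep_def rd_def min_absorb1)
next
  case (Cons p ps)
  have IH: "rch x B (IL s, length (pre @ nel p), wt (nbits i), 0, out @ init_out i s p) c'"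
    using Cons.prems by (intro Cons.IH) (auto simp: nel_def[abs_def] add.assoc)
  show ?case
    by (rule pinit[where post = "concat (map nel ps) @ TClose # post"]) (use Cons.prems IH in \<open>auto simp: nel_def[abs_def]\<close>)
qed

lemma flist: "(x :: 's tok list) = pre @ concat (map nel ps) @ TClose # post \<Longrightarrow> length (nbits i) + 1 \<le> B \<Longrightarrow>
  rch x B (TLo s, Suc (length pre + length (concat (map nel ps) :: 's tok list)), wt (nbits i), 0,
     out @ concat (map (fin_out i s) ps)) c' \<Longrightarrow>
  rch x B (FL s, length pre, wt (nbits i), 0, out) c'"
proof (induction ps arbitrary: pre out)
  case Nil
  then show ?case by (intro rstep') (auto simp: astep_def rd_def min_absorb1)
next
  case (Cons p ps)
  have IH: "rch x B (FL s, length (pre @ nel p), wt (nbits i), 0, out @ fin_out i s p) c'"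
    using Cons.prems by (intro Cons.IH) (auto simp: nel_def[abs_def] add.assoc)
  show ?case
    by (rule pfin[where post = "concat (map nel ps) @ TClose # post"]) (use Cons.prems IH in \<open>auto simp: nel_def[abs_def]\<close>)
qed

definition tel :: "nat \<times> 's \<times> nat \<Rightarrow> 's tok list" where
  "tel t = (case t of (p, a, q) \<Rightarrow> map TBit (nbits p) @ TComma # TSym a # TComma # map TBit (nbits q) @ [TComma])"

definition trout :: "nat \<Rightarrow> bool \<Rightarrow> nat \<times> 's \<times> nat \<Rightarrow> 's tok list" where
  "trout i s t = (case t of (p, a, q) \<Rightarrow> tr_out i s p a q)"

lemma tlist: "x = pre @ concat (map tel ts) @ TClose # post \<Longrightarrow> length (nbits i) + 1 \<le> B \<Longrightarrow>
  rch x B (NC s, Suc (length pre + length (concat (map tel ts))), wt (nbits i), 0,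
     out @ concat (map (trout i s) ts)) c' \<Longrightarrow>
  rch x B (TL s, length pre, wt (nbits i), 0, out) c'"
proof (induction ts arbitrary: pre out)
  case Nil
  then show ?case by (intro rstep') (auto simp: astep_def rd_def min_absorb1)
next
  case (Cons t ts)
  obtain p a q where t: "t = (p, a, q)" by (cases t) auto
  have IH: "rch x B (TL s, length (pre @ tel t), wt (nbits i), 0, out @ trout i s t) c'"
    using Cons.prems by (intro Cons.IH) (auto simp: tel_def[abs_def] t add.assoc)
  show ?case
    by (rule ptr[where post = "concat (map tel ts) @ TClose # post" and a = a and p = p and q = q])
       (use Cons.prems IH in \<open>auto simp: tel_def[abs_def] trout_def[abs_def] t eval_nat_numeral add.assoc\<close>)
qed




lemma enc_nfa_eq: "enc_nfa X = TOpen # (TOpen # concat (map nel (initial X)) @ [TClose]) @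
   (TOpen # concat (map nel (final X)) @ [TClose]) @ (TOpen # concat (map tel (trans X)) @ [TClose]) @ [TClose]"
proof -
  have a: "(\<lambda>x. enc_tr x @ [TComma]) = tel" by (auto simp: fun_eq_iff enc_tr_def tel_def enc_nat_nbits)
  have b: "(\<lambda>x. enc_nat x @ [TComma]) = nel" by (auto simp: fun_eq_iff nel_def enc_nat_nbits)
  show ?thesis unfolding enc_nfa_def enc_list_def a b by simp
qed

lemma ilist2: "(x :: 's tok list) = pre @ concat (map nel ps) @ TClose # post \<Longrightarrow> length (nbits i) + 1 \<le> B \<Longrightarrow> ih = length pre \<Longrightarrow>
  rch x B (FLo s, Suc (length pre + length (concat (map nel ps) :: 's tok list)), wt (nbits i), 0,
     out @ concat (map (init_out i s) ps)) c' \<Longrightarrow>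
  rch x B (IL s, ih, wt (nbits i), 0, out) c'"
  using ilist by blast
lemma flist2: "(x :: 's tok list) = pre @ concat (map nel ps) @ TClose # post \<Longrightarrow> length (nbits i) + 1 \<le> B \<Longrightarrow> ih = length pre \<Longrightarrow>
  rch x B (TLo s, Suc (length pre + length (concat (map nel ps) :: 's tok list)), wt (nbits i), 0,
     out @ concat (map (fin_out i s) ps)) c' \<Longrightarrow>
  rch x B (FL s, ih, wt (nbits i), 0, out) c'"
  using flist by blast
lemma tlist2: "x = pre @ concat (map tel ts) @ TClose # post \<Longrightarrow> length (nbits i) + 1 \<le> B \<Longrightarrow> ih = length pre \<Longrightarrow>
  rch x B (NC s, Suc (length pre + length (concat (map tel ts))), wt (nbits i), 0,
     out @ concat (map (trout i s) ts)) c' \<Longrightarrow>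
  rch x B (TL s, ih, wt (nbits i), 0, out) c'"
  using tlist by blast

definition nfa_out :: "nat \<Rightarrow> bool \<Rightarrow> 's nfa \<Rightarrow> 's tok list" where
  "nfa_out i s X = concat (map (init_out i s) (initial X)) @ concat (map (fin_out i s) (final X))
     @ concat (map (trout i s) (trans X))"

lemma pnfa: "(x::'s tok list) = pre @ enc_nfa X @ post \<Longrightarrow> length (nbits i) + 1 \<le> B \<Longrightarrow>
  rch x B (NC s, length pre + length (enc_nfa X) - 1, wt (nbits i), 0, out @ nfa_out i s X) c' \<Longrightarrow>
  rch x B (NI s, Suc (length pre), wt (nbits i), 0, out) c'"
proof -
  assume x: "x = pre @ enc_nfa X @ post" and b: "length (nbits i) + 1 \<le> B"
    and r: "rch x B (NC s, length pre + length (enc_nfa X) - 1, wt (nbits i), 0, out @ nfa_out i s X) c'"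
  let ?I = "concat (map nel (initial X)) :: 's tok list" and ?F = "concat (map nel (final X)) :: 's tok list"
    and ?T = "concat (map tel (trans X)) :: 's tok list"
  have x': "x = pre @ TOpen # TOpen # ?I @ TClose # TOpen # ?F @ TClose # TOpen # ?T @ TClose # TClose # post"
    using x by (simp add: enc_nfa_eq)
  have l: "length (enc_nfa X) = length ?I + length ?F + length ?T + 8"
    by (simp add: enc_nfa_eq)
  show ?thesis
    apply (rule rstep') apply simp
    apply (simp add: astep_def x' min_absorb1 le_SucI)
    apply (rule ilist2[where ps = "initial X" and pre = "pre @ [TOpen, TOpen]" and post = "TOpen # ?F @ TClose # TOpen # ?T @ TClose # TClose # post"])
       apply simp
      apply (rule b)
    subgoal by (simp add: min_def)
    apply (rule rstep') apply simp
    apply (simp add: astep_def x' min_absorb1 le_SucI)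
    apply (rule flist2[where ps = "final X" and pre = "pre @ [TOpen, TOpen] @ ?I @ [TClose, TOpen]" and post = "TOpen # ?T @ TClose # TClose # post"])
       apply simp
      apply (rule b)
    subgoal by (simp add: min_def)
    apply (rule rstep') apply simp
    apply (simp add: astep_def x' min_absorb1 le_SucI)
    apply (rule tlist2[where ts = "trans X" and pre = "pre @ [TOpen, TOpen] @ ?I @ [TClose, TOpen] @ ?F @ [TClose, TOpen]" and post = "TClose # post"])
       apply simp
      apply (rule b)
    subgoal by (simp add: min_def)
    using r x' l by (simp add: nfa_out_def add.assoc eval_nat_numeral)
qed



lemma rr: "s \<noteq> Halt \<Longrightarrow> ih < length x \<Longrightarrow> wh \<le> B \<Longrightarrow> dl s (rd x ih) (wk wh) = (s', Rgt, wk wh, Stay, None) \<Longrightarrow>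
  rch x B (s', Suc ih, wk, wh, out) c' \<Longrightarrow> rch x B (s, ih, wk, wh, out) c'"
  by (intro rstep') (auto simp: astep_def)

lemma enc_nfa_pos: "0 < length (enc_nfa X)"
  by (simp add: enc_nfa_def)

lemma enc_nfa_hd: "enc_nfa X = TOpen # tl (enc_nfa X)"
  by (simp add: enc_nfa_def)

definition comp_enc :: "'s nfa \<times> 's nfa \<Rightarrow> 's tok list" where
  "comp_enc c = (case c of (A, B) \<Rightarrow> enc_nfa A @ enc_nfa B @ [TComma])"

definition comp_out :: "nat \<Rightarrow> 's nfa \<times> 's nfa \<Rightarrow> 's tok list" where
  "comp_out i c = (case c of (A, B) \<Rightarrow> nfa_out i False A @ nfa_out i True B)"

lemma nbits_len_mono: "length (nbits i) \<le> length (nbits (Suc i))"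
  by (simp add: nbits_Suc length_incb)

lemma pcomp: "(x :: 's tok list) = pre @ enc_nfa Xa @ enc_nfa Xb @ TComma # post \<Longrightarrow> length (nbits (Suc i)) + 1 \<le> B \<Longrightarrow>
  rch x B (CS, length pre + length (enc_nfa Xa) + length (enc_nfa Xb) + 1, wt (nbits (Suc i)), 0,
     out @ nfa_out i False Xa @ nfa_out i True Xb) c' \<Longrightarrow>
  rch x B (CS, length pre, wt (nbits i), 0, out) c'"
proof -
  assume x: "x = pre @ enc_nfa Xa @ enc_nfa Xb @ TComma # post" and b1: "length (nbits (Suc i)) + 1 \<le> B"
    and r: "rch x B (CS, length pre + length (enc_nfa Xa) + length (enc_nfa Xb) + 1, wt (nbits (Suc i)), 0,
     out @ nfa_out i False Xa @ nfa_out i True Xb) c'"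
  have b: "length (nbits i) + 1 \<le> B" using b1 nbits_len_mono[of i] by simp
  have pa: "0 < length (enc_nfa Xa)" "0 < length (enc_nfa Xb)" by (rule enc_nfa_pos)+
  have lx: "length x = length pre + length (enc_nfa Xa) + length (enc_nfa Xb) + 1 + length post"
    using x by simp
  let ?ia = "length pre + length (enc_nfa Xa)" and ?ib = "length pre + length (enc_nfa Xa) + length (enc_nfa Xb)"
  have rd0: "rd x (length pre) = Some TOpen"
  proof -
    have "enc_nfa Xa ! 0 = TOpen" by (simp add: enc_nfa_def)
    then show ?thesis using x enc_nfa_pos[of Xa] by (simp add: rd_def nth_append)
  qed
  have rdc: "rd x ?ib = Some TComma"
    using x by (simp add: rd_def nth_append)
  have s8: "rch x B (CS, Suc ?ib, wt (nbits (Suc i)), 0, out @ nfa_out i False Xa @ nfa_out i True Xb) c'"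
    using r by simp
  have s7: "rch x B (Inc, Suc ?ib, wt (nbits i), 1, out @ nfa_out i False Xa @ nfa_out i True Xb) c'"
    using inc_go[of "Suc ?ib" x 0 "nbits i" B] s8 b lx by (simp add: nbits_Suc)
  have s6: "rch x B (CC, ?ib, wt (nbits i), 0, out @ nfa_out i False Xa @ nfa_out i True Xb) c'"
    using s7 lx by (intro rstep') (auto simp: astep_def min_absorb1)
  have s5: "rch x B (NC True, ?ib - 1, wt (nbits i), 0, out @ nfa_out i False Xa @ nfa_out i True Xb) c'"
    by (rule rr[where s' = CC]) (use s6 lx pa in auto)
  have s4: "rch x B (NI True, Suc ?ia, wt (nbits i), 0, out @ nfa_out i False Xa) c'"
    using pnfa[of x "pre @ enc_nfa Xa" Xb "TComma # post" i B True "out @ nfa_out i False Xa" c'] x b s5 pa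
    by (simp add: add.assoc)
  have s3: "rch x B (NBo, ?ia, wt (nbits i), 0, out @ nfa_out i False Xa) c'"
    by (rule rr[where s' = "NI True"]) (use s4 lx pa in auto)
  have s2: "rch x B (NC False, ?ia - 1, wt (nbits i), 0, out @ nfa_out i False Xa) c'"
    by (rule rr[where s' = NBo]) (use s3 lx pa in auto)
  have s1: "rch x B (NI False, Suc (length pre), wt (nbits i), 0, out) c'"
    using pnfa[of x pre Xa "enc_nfa Xb @ TComma # post" i B False out c'] x b s2 pa by simp
  show ?thesis
    by (rule rr[where s' = "NI False"]) (use s1 lx pa rd0 in auto)
qed



lemma comp_enc_simp: "comp_enc (A, B) = enc_nfa A @ enc_nfa B @ [TComma]" by (simp add: comp_enc_def)
lemma comp_out_simp: "comp_out i (A, B) = nfa_out i False A @ nfa_out i True B" by (simp add: comp_out_def)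

fun outs :: "nat \<Rightarrow> ('s nfa \<times> 's nfa) list \<Rightarrow> 's tok list" where
  "outs i [] = []"
| "outs i (c # cs) = comp_out i c @ outs (Suc i) cs"

lemma prec: "(x :: 's tok list) = pre @ concat (map comp_enc cs) @ TClose # post \<Longrightarrow>
  length (nbits (i + length cs)) + 1 \<le> B \<Longrightarrow>
  rch x B (CS, length pre, wt (nbits i), 0, out)
    (Halt, length pre + length (concat (map comp_enc cs)), wt (nbits (i + length cs)), 0,
     out @ outs i cs @ [TClose, TComma, TComma, TClose])"
proof (induction cs arbitrary: pre i out)
  case Nil
  have rd: "rd x (length pre) = Some TClose" using Nil by (simp add: rd_def)
  have l: "length pre \<le> length x" using Nil by simp
  show ?case
    apply (rule rstep') apply simp
    apply (simp add: astep_def rd l min_absorb1)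
    apply (rule rstep') apply simp
    apply (simp add: astep_def rd l min_absorb1)
    apply (rule rstep') apply simp
    apply (simp add: astep_def rd l min_absorb1)
    apply (rule rstep') apply simp
    apply (simp add: astep_def rd l min_absorb1)
    apply (rule rrefl)
    by (simp add: whd_def)
next
  case (Cons c cs)
  obtain Xa Xb where c: "c = (Xa, Xb)" by (cases c) auto
  have b: "length (nbits (Suc i)) + 1 \<le> B"
  proof -
    have "length (nbits (Suc i)) \<le> length (nbits (i + length (c # cs)))"
    proof -
      have m: "\<And>a d. length (nbits a) \<le> length (nbits (a + d))"
      proof -
        fix a d show "length (nbits a) \<le> length (nbits (a + d))"
          by (induction d) (auto intro: order_trans nbits_len_mono)
      qed
      show ?thesis using m[of "Suc i" "length cs"] by simp
    qed
    then show ?thesis using Cons.prems by simp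
  qed
  have IH: "rch x B (CS, length (pre @ comp_enc c), wt (nbits (Suc i)), 0, (out @ comp_out i c))
    (Halt, length (pre @ comp_enc c) + length (concat (map comp_enc cs)), wt (nbits (Suc i + length cs)), 0,
     (out @ comp_out i c) @ outs (Suc i) cs @ [TClose, TComma, TComma, TClose])"
    using Cons.prems by (intro Cons.IH) auto
  show ?case
    apply (rule pcomp[where Xa = Xa and Xb = Xb and post = "concat (map comp_enc cs) @ TClose # post"])
    using Cons.prems apply (simp add: c comp_enc_simp)
    apply (rule b)
    using IH by (simp add: c comp_enc_simp comp_out_simp add.assoc)
qed



lemma phase1: "j \<le> length x \<Longrightarrow> 0 < length x \<Longrightarrow>
  rch x B (L 0, length x - 1, wk, 0, out @ replicate (4 * (length x - j)) (TBit True) @ [TComma]) c' \<Longrightarrow>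
  rch x B (P1 0, j, wk, 0, out) c'"
proof (induction "length x - j" arbitrary: j out)
  case 0
  then have j: "j = length x" by simp
  show ?case using 0 j
    by (intro rstep') (auto simp: astep_def rd_def)
next
  case (Suc m)
  then have jl: "j < length x" by simp
  have e: "length x - j = Suc (length x - Suc j)" using jl by simp
  have IH: "rch x B (P1 0, Suc j, wk, 0, out @ replicate 4 (TBit True)) c'"
    using Suc.prems Suc.hyps(2) jl e by (intro Suc.hyps(1)) (auto simp: replicate_add)
  show ?case
    apply (rule rstep') apply simp
    apply (simp add: astep_def rd_def jl min_absorb1)
    apply (rule rstep') apply simp
    apply (simp add: astep_def rd_def jl min_absorb1)
    apply (rule rstep') apply simp
    apply (simp add: astep_def rd_def jl min_absorb1)
    apply (rule rstep') apply simp
    apply (simp add: astep_def rd_def jl min_absorb1 Suc_leI)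
    using IH by (simp add: numeral_eq_Suc)
qed

definition no4 :: "'s tok list \<Rightarrow> bool" where
  "no4 x \<longleftrightarrow> (\<forall>j. j + 3 < length x \<longrightarrow>
     \<not> (x ! j = TOpen \<and> x ! (j + 1) = TOpen \<and> x ! (j + 2) = TOpen \<and> x ! (j + 3) = TOpen))"

lemma phase2: "no4 x \<Longrightarrow> 0 < length x \<Longrightarrow> x ! 0 = TOpen \<Longrightarrow> j < length x \<Longrightarrow> k \<le> 3 \<Longrightarrow>
  (0 < j \<longrightarrow> (\<forall>m. 1 \<le> m \<and> m \<le> k \<longrightarrow> j + m < length x \<and> x ! (j + m) = TOpen)) \<Longrightarrow>
  rch x B (R0, 0, (\<lambda>_. 0)(0 := 5), 0, out @ [TOpen]) c' \<Longrightarrow>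
  rch x B (L k, j, \<lambda>_. 0, 0, out) c'"
proof (induction "4 * j + (3 - k)" arbitrary: j k rule: less_induct)
  case less
  show ?case
  proof (cases "x ! j = TOpen")
    case o: True
    show ?thesis
    proof (cases "k = 3")
      case True
      show ?thesis
      proof (cases "j = 0")
        case True
        with less.prems o \<open>k = 3\<close> show ?thesis
          by (intro rstep') (auto simp: astep_def rd_def)
      next
        case False
        then have "j + 3 < length x \<and> x ! (j + 1) = TOpen \<and> x ! (j + 2) = TOpen \<and> x ! (j + 3) = TOpen"
          using less.prems(6) \<open>k = 3\<close> by (metis le_refl one_le_numeral le_numeral_extra(4) nat_1_add_1 numeral_le_iff semiring_norm(68) less_numeral_extra(1) one_le_numeral add_2_eq_Suc' numeral_2_eq_2 numeral_3_eq_3 le_Suc_eq le_add1 gr0I not_gr0 order_refl)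
        then show ?thesis using less.prems(1) o unfolding no4_def by blast
      qed
    next
      case k3: False
      have nxt: "rch x B (L (Suc k), j - 1, \<lambda>_. 0, 0, out) c'"
      proof (rule less.hyps)
        show "4 * (j - 1) + (3 - Suc k) < 4 * j + (3 - k)" using k3 less.prems by auto
        show "0 < j - 1 \<longrightarrow> (\<forall>m. 1 \<le> m \<and> m \<le> Suc k \<longrightarrow> j - 1 + m < length x \<and> x ! (j - 1 + m) = TOpen)"
        proof (intro impI allI)
          fix m assume j: "0 < j - 1" and m: "1 \<le> m \<and> m \<le> Suc k"
          show "j - 1 + m < length x \<and> x ! (j - 1 + m) = TOpen"
          proof (cases "m = 1")
            case True then show ?thesis using j o less.prems by auto
          next
            case False
            have "1 \<le> m - 1 \<and> m - 1 \<le> k" using m False by auto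
            then have "j + (m - 1) < length x \<and> x ! (j + (m - 1)) = TOpen"
            proof -
              have P: "\<forall>m. 1 \<le> m \<and> m \<le> k \<longrightarrow> j + m < length x \<and> x ! (j + m) = TOpen"
                using less.prems(6) j by simp
              show ?thesis using P[rule_format, of "m - 1"] \<open>1 \<le> m - 1 \<and> m - 1 \<le> k\<close> by blast
            qed
            moreover have "j - 1 + m = j + (m - 1)" using j False m by auto
            ultimately show ?thesis by simp
          qed
        qed
      qed (use less.prems k3 in auto)
      show ?thesis using less.prems o k3 nxt
        by (intro rstep') (auto simp: astep_def rd_def)
    qed
  next
    case no: False
    show ?thesis
    proof (cases "j = 0")
      case True
      then show ?thesis using no less.prems by simp
    next
      case False
      have nxt: "rch x B (L 0, j - 1, \<lambda>_. 0, 0, out) c'"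
        by (rule less.hyps) (use less.prems False in auto)
      show ?thesis using less.prems no False nxt
        by (intro rstep') (auto simp: astep_def rd_def)
    qed
  qed
qed



fun okr :: "nat \<Rightarrow> 's tok list \<Rightarrow> bool" where
  "okr k [] = True"
| "okr k (a # xs) = (if a = TOpen then k < 3 \<and> okr (Suc k) xs else okr 0 xs)"

fun runk :: "nat \<Rightarrow> 's tok list \<Rightarrow> nat" where
  "runk k [] = k"
| "runk k (a # xs) = (if a = TOpen then runk (Suc k) xs else runk 0 xs)"

lemma okr_append: "okr k (a @ b) = (okr k a \<and> okr (runk k a) b)"
  by (induction a arbitrary: k) auto

lemma runk_append: "runk k (a @ b) = runk (runk k a) b"
  by (induction a arbitrary: k) auto

lemma noopen: "TOpen \<notin> set xs \<Longrightarrow> okr k xs \<and> runk k xs = (if xs = [] then k else 0)"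
proof (induction xs arbitrary: k)
  case Nil then show ?case by simp
next
  case (Cons a xs) then show ?case by (cases xs) auto
qed

lemma okr_no4: "okr k xs \<Longrightarrow> j + 3 < length xs \<Longrightarrow>
   \<not> (xs ! j = TOpen \<and> xs ! (j + 1) = TOpen \<and> xs ! (j + 2) = TOpen \<and> xs ! (j + 3) = TOpen)"
proof (induction xs arbitrary: k j)
  case Nil then show ?case by simp
next
  case (Cons a xs)
  show ?case
  proof (cases j)
    case 0
    then show ?thesis using Cons.prems
      by (cases xs; cases "tl xs"; cases "tl (tl xs)"; auto simp: numeral_eq_Suc)
  next
    case (Suc j')
    have "okr (if a = TOpen then Suc k else 0) xs" using Cons.prems by (auto split: if_splits)
    from Cons.IH[OF this, of j'] Cons.prems Suc show ?thesis by (simp add: add.commute)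
  qed
qed

lemma nel_noopen: "TOpen \<notin> set (concat (map nel ps))" by (auto simp: nel_def)
lemma tel_noopen: "TOpen \<notin> set (concat (map tel ps))" by (auto simp: tel_def split: prod.splits)

lemma okr_nfa: "k \<le> 1 \<Longrightarrow> okr k (enc_nfa (X :: 's nfa)) \<and> runk k (enc_nfa X) = 0"
proof -
  assume k: "k \<le> 1"
  have a: "\<And>k. okr k (concat (map nel (initial X)) :: 's tok list)"
    using noopen[OF nel_noopen[of "initial X"], THEN conjunct1] by blast
  have b: "\<And>k. okr k (concat (map nel (final X)) :: 's tok list)"
    using noopen[OF nel_noopen[of "final X"], THEN conjunct1] by blast
  have c: "\<And>k. okr k (concat (map tel (trans X)) :: 's tok list)"
    using noopen[OF tel_noopen[of "trans X"], THEN conjunct1] by blast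
  show ?thesis using k a b c by (simp add: enc_nfa_eq okr_append runk_append)
qed

lemma okr_comps: "k \<le> 1 \<Longrightarrow> okr k (concat (map comp_enc cs)) \<and> runk k (concat (map comp_enc cs)) \<le> 1"
proof (induction cs arbitrary: k)
  case Nil then show ?case by simp
next
  case (Cons c cs)
  obtain A B where c: "c = (A, B)" by (cases c) auto
  show ?case using Cons okr_nfa[of k A] okr_nfa[of 0 B] Cons.IH[of 0]
    by (simp add: c comp_enc_simp okr_append runk_append)
qed

lemma enc_rec_eq: "enc_rec Rs = TOpen # concat (map comp_enc Rs) @ [TClose]"
proof -
  have e: "(\<lambda>x. (case x of (A, B) \<Rightarrow> enc_nfa A @ enc_nfa B) @ [TComma]) = comp_enc"
    by (auto simp: fun_eq_iff comp_enc_def split: prod.splits)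
  show ?thesis unfolding enc_rec_def enc_list_def e by simp
qed

lemma no4_rec: "no4 (enc_rec Rs)"
proof -
  have "okr 0 (enc_rec Rs)"
    using okr_comps[of 1 Rs] by (simp add: enc_rec_eq okr_append)
  then show ?thesis unfolding no4_def using okr_no4 by blast
qed

lemma wt_nil: "(\<lambda>_. 0)(0 := 5) = wt []"
  by (auto simp: fun_eq_iff wt_def)

definition final_out :: "('s nfa \<times> 's nfa) list \<Rightarrow> 's tok list" where
  "final_out Rs = TOpen # replicate (4 * length (enc_rec Rs)) (TBit True) @ [TComma] @ [TOpen]
     @ outs 0 Rs @ [TClose, TComma, TComma, TClose]"

lemma run_all: "\<exists>ih wk wh. rch (enc_rec Rs) (length (nbits (length Rs)) + 1) cinit (Halt, ih, wk, wh, final_out Rs)"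
proof -
  let ?x = "enc_rec Rs" and ?B = "length (nbits (length Rs)) + 1"
  have x: "?x = [TOpen] @ concat (map comp_enc Rs) @ TClose # []" by (simp add: enc_rec_eq)
  have n: "0 < length ?x" "?x ! 0 = TOpen" by (simp_all add: enc_rec_eq)
  have c: "rch ?x ?B (CS, 1, wt (nbits 0), 0, TOpen # replicate (4 * length ?x) (TBit True) @ [TComma] @ [TOpen])
     (Halt, 1 + length (concat (map comp_enc Rs)), wt (nbits (0 + length Rs)), 0, final_out Rs)"
    using prec[OF x, of 0 ?B "TOpen # replicate (4 * length ?x) (TBit True) @ [TComma] @ [TOpen]"]
    by (simp add: final_out_def)
  have r0: "rch ?x ?B (R0, 0, (\<lambda>_. 0)(0 := 5), 0, TOpen # replicate (4 * length ?x) (TBit True) @ [TComma] @ [TOpen])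
     (Halt, 1 + length (concat (map comp_enc Rs)), wt (nbits (0 + length Rs)), 0, final_out Rs)"
    using c n by (intro rstep') (auto simp: astep_def wt_nil nbits.simps[of 0] min_absorb1 Suc_leI)
  have l0: "rch ?x ?B (L 0, length ?x - 1, \<lambda>_. 0, 0, TOpen # replicate (4 * length ?x) (TBit True) @ [TComma])
     (Halt, 1 + length (concat (map comp_enc Rs)), wt (nbits (0 + length Rs)), 0, final_out Rs)"
    by (rule phase2) (use no4_rec[of Rs] n r0 in auto)
  have p1: "rch ?x ?B (P1 0, 0, \<lambda>_. 0, 0, [TOpen])
     (Halt, 1 + length (concat (map comp_enc Rs)), wt (nbits (0 + length Rs)), 0, final_out Rs)"
    by (rule phase1) (use l0 n in auto)
  have "rch ?x ?B cinit
     (Halt, 1 + length (concat (map comp_enc Rs)), wt (nbits (0 + length Rs)), 0, final_out Rs)"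
    unfolding cinit_def using p1 by (intro rstep') (auto simp: astep_def)
  then show ?thesis by blast
qed



fun bnum :: "bool list \<Rightarrow> nat" where
  "bnum [] = 0"
| "bnum (b # bs) = (if b then 1 else 0) + 2 * bnum bs"

lemma nbits_1: "nbits (Suc 0) = [True]"
  by (simp add: nbits.simps[of "Suc 0"] nbits.simps[of 0])

lemma bnum_pos: "bs \<noteq> [] \<Longrightarrow> last bs \<Longrightarrow> 0 < bnum bs"
  by (induction bs) (auto split: if_splits)

lemma nbits_bnum: "bs \<noteq> [] \<Longrightarrow> last bs \<Longrightarrow> nbits (bnum bs) = bs"
proof (induction bs)
  case Nil then show ?case by simp
next
  case (Cons b bs)
  show ?case
  proof (cases "bs = []")
    case True
    then show ?thesis using Cons.prems by (simp add: nbits_1)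
  next
    case False
    have p: "0 < bnum bs" using False Cons.prems by (intro bnum_pos) auto
    have "nbits (bnum (b # bs)) = odd (bnum (b # bs)) # nbits (bnum (b # bs) div 2)"
      using p by (subst nbits.simps) simp
    also have "bnum (b # bs) div 2 = bnum bs" by simp
    also have "odd (bnum (b # bs)) = b" by simp
    finally show ?thesis using Cons False by simp
  qed
qed

lemma bnum_nbits: "bnum (nbits n) = n"
proof (induction n rule: nbits.induct)
  case (1 n)
  show ?case
  proof (cases "n = 0")
    case True then show ?thesis by (simp add: nbits.simps)
  next
    case False
    then have "bnum (nbits n) = (if odd n then 1 else 0) + 2 * bnum (nbits (n div 2))"
      by (subst nbits.simps) simp
    then show ?thesis using 1 False by simp
  qed
qed

lemma nbits_inj: "nbits a = nbits b \<Longrightarrow> a = b"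
  by (metis bnum_nbits)

lemma bnum_less: "bnum bs < 2 ^ length bs"
  by (induction bs) auto

definition good :: "bool list \<Rightarrow> bool" where
  "good r \<longleftrightarrow> r = [True] \<or> (\<exists>t. r = False # t)"

lemma ilv_inj: "ilv a @ r = ilv b @ r' \<Longrightarrow> good r \<Longrightarrow> good r' \<Longrightarrow> a = b \<and> r = r'"
proof (induction a arbitrary: b)
  case Nil
  then show ?case by (cases b) (auto simp: good_def)
next
  case (Cons x a)
  then show ?case by (cases b) (auto simp: good_def)
qed

definition Eid :: "nat \<Rightarrow> nat" where "Eid i = bnum (Ebl i)"
definition Nid :: "nat \<Rightarrow> bool \<Rightarrow> nat \<Rightarrow> nat" where "Nid i s p = bnum (Nbl i s p)"

lemma enc_Eid: "enc_nat (Eid i) = map TBit (Ebl i)"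
  unfolding Eid_def enc_nat_nbits by (subst nbits_bnum) (auto simp: Ebl_def)
lemma enc_Nid: "enc_nat (Nid i s p) = map TBit (Nbl i s p)"
  unfolding Nid_def enc_nat_nbits by (subst nbits_bnum) (auto simp: Nbl_def)

lemma Eid_inj: "Eid i = Eid j \<Longrightarrow> i = j"
proof -
  assume "Eid i = Eid j"
  then have "Ebl i = Ebl j" using nbits_bnum[of "Ebl i"] nbits_bnum[of "Ebl j"] by (simp add: Eid_def Ebl_def)
  then have "ilv (nbits i) @ [True] = ilv (nbits j) @ [True]" by (simp add: Ebl_def)
  then show ?thesis using ilv_inj[of "nbits i" "[True]" "nbits j" "[True]"] nbits_inj by (auto simp: good_def)
qed

lemma Nid_inj: "Nid i s p = Nid j t q \<Longrightarrow> i = j \<and> s = t \<and> p = q"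
proof -
  assume "Nid i s p = Nid j t q"
  then have "Nbl i s p = Nbl j t q" using nbits_bnum[of "Nbl i s p"] nbits_bnum[of "Nbl j t q"] by (simp add: Nid_def Nbl_def)
  then have "ilv (nbits i) @ (False # s # nbits p @ [True]) = ilv (nbits j) @ (False # t # nbits q @ [True])"
    by (simp add: Nbl_def)
  then have "nbits i = nbits j \<and> (False # s # nbits p @ [True]) = (False # t # nbits q @ [True])"
    by (rule ilv_inj) (auto simp: good_def)
  then show ?thesis using nbits_inj by auto
qed

lemma EN_neq: "Eid i \<noteq> Nid j t q"
proof
  assume "Eid i = Nid j t q"
  then have "Ebl i = Nbl j t q" using nbits_bnum[of "Ebl i"] nbits_bnum[of "Nbl j t q"]
    by (simp add: Eid_def Nid_def Nbl_def Ebl_def)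
  then have "ilv (nbits i) @ [True] = ilv (nbits j) @ (False # t # nbits q @ [True])"
    by (simp add: Nbl_def Ebl_def)
  then show False using ilv_inj[of "nbits i" "[True]" "nbits j"] by (auto simp: good_def)
qed

definition einit :: "nat \<Rightarrow> bool \<Rightarrow> nat \<Rightarrow> nat \<times> ('s + nat) \<times> nat" where
  "einit i s p = (Eid i, Inr (if s then 1 else 0), Nid i s p)"
definition efin :: "nat \<Rightarrow> bool \<Rightarrow> nat \<Rightarrow> nat \<times> ('s + nat) \<times> nat" where
  "efin i s f = (Nid i s f, Inr (if s then 3 else 2), Eid i)"
definition etr :: "nat \<Rightarrow> bool \<Rightarrow> nat \<times> 's \<times> nat \<Rightarrow> nat \<times> ('s + nat) \<times> nat" where
  "etr i s t = (case t of (p, a, q) \<Rightarrow> (Nid i s p, Inl a, Nid i s q))"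

definition nfa_edges :: "nat \<Rightarrow> bool \<Rightarrow> 's nfa \<Rightarrow> (nat \<times> ('s + nat) \<times> nat) list" where
  "nfa_edges i s X = map (einit i s) (initial X) @ map (efin i s) (final X) @ map (etr i s) (trans X)"

fun all_edges :: "nat \<Rightarrow> ('s nfa \<times> 's nfa) list \<Rightarrow> (nat \<times> ('s + nat) \<times> nat) list" where
  "all_edges i [] = []"
| "all_edges i (c # cs) = nfa_edges i False (fst c) @ nfa_edges i True (snd c) @ all_edges (Suc i) cs"

definition eenc :: "nat \<times> ('s + nat) \<times> nat \<Rightarrow> 's tok list" where
  "eenc e = enc_edge e @ [TComma]"

lemma enc_nat_small: "enc_nat (0::nat) = []" "enc_nat (1::nat) = [TBit True]"
  "enc_nat (2::nat) = [TBit False, TBit True]" "enc_nat (3::nat) = [TBit True, TBit True]"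
  "enc_nat (Suc 0) = [TBit True]"
proof -
  have "nbits (2::nat) = [False, True]" using nbits.simps[of 2] nbits_1 by simp
  moreover have "nbits (3::nat) = [True, True]" using nbits.simps[of 3] nbits_1 by simp
  ultimately show "enc_nat (0::nat) = []" "enc_nat (1::nat) = [TBit True]" "enc_nat (Suc 0) = [TBit True]"
    "enc_nat (2::nat) = [TBit False, TBit True]" "enc_nat (3::nat) = [TBit True, TBit True]"
    by (simp_all add: enc_nat_nbits nbits.simps[of 0] nbits_1)
qed

lemma eenc_nfa: "concat (map eenc (nfa_edges i s X)) = nfa_out i s X"
proof -
  have a: "eenc (einit i s p) = init_out i s p" for p
    by (cases s) (simp_all add: eenc_def einit_def enc_edge_def init_out_def enc_Eid enc_Nid enc_nat_small)
  have b: "eenc (efin i s p) = fin_out i s p" for p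
    by (cases s) (simp_all add: eenc_def efin_def enc_edge_def fin_out_def enc_Eid enc_Nid enc_nat_small)
  have c: "eenc (etr i s t) = trout i s t" for t
    by (cases t) (simp add: eenc_def etr_def enc_edge_def trout_def tr_out_def enc_Eid enc_Nid)
  show ?thesis by (simp add: nfa_edges_def nfa_out_def comp_def a b c)
qed

lemma eenc_all: "concat (map eenc (all_edges i cs)) = outs i cs"
  by (induction cs arbitrary: i) (auto simp: eenc_nfa comp_out_def split: prod.splits)

definition GG :: "('s nfa \<times> 's nfa) list \<Rightarrow> ('s + nat) graph" where
  "GG Rs = Graph (2 ^ (4 * length (enc_rec Rs)) - 1) (all_edges 0 Rs)"

lemma nbits_ones: "0 < m \<Longrightarrow> nbits (2 ^ m - 1) = replicate m True"
proof -
  assume m: "0 < m"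
  have "bnum (replicate m True) = 2 ^ m - 1"
  proof (induction m)
    case (Suc m)
    have "0 < (2::nat) ^ m" by simp
    moreover have "Suc (2 * (k - 1)) = 2 * k - 1" if "0 < k" for k :: nat using that by arith
    ultimately show ?case using Suc by simp
  qed simp
  moreover have "nbits (bnum (replicate m True)) = replicate m True"
    using m by (intro nbits_bnum) auto
  ultimately show ?thesis by simp
qed

lemma out_eq: "final_out Rs = enc_out (GG Rs) 0 0"
proof -
  have n: "0 < 4 * length (enc_rec Rs)" by (simp add: enc_rec_eq)
  have "enc_list enc_edge (all_edges 0 Rs) = TOpen # outs 0 Rs @ [TClose]"
    using eenc_all[of 0 Rs] by (simp add: enc_list_def eenc_def[abs_def])
  then show ?thesis
    using nbits_ones[OF n] by (simp add: final_out_def enc_out_def GG_def enc_nat_nbits nbits.simps[of 0])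
qed



lemma len_nbits_le: "length (nbits n) \<le> n"
proof (induction n rule: nbits.induct)
  case (1 n)
  show ?case
  proof (cases "n = 0")
    case True then show ?thesis by (simp add: nbits.simps)
  next
    case False
    then have "length (nbits n) = Suc (length (nbits (n div 2)))" by (subst nbits.simps) simp
    then show ?thesis using 1 False by simp
  qed
qed

lemma len_ilv[simp]: "length (ilv bs) = 2 * length bs"
  by (induction bs) auto

lemma len_concat_mem: "x \<in> set xs \<Longrightarrow> length (f x) \<le> length (concat (map f xs))"
  by (induction xs) auto

lemma len_concat_ge: "(\<And>x. x \<in> set xs \<Longrightarrow> 1 \<le> length (f x)) \<Longrightarrow> length xs \<le> length (concat (map f xs))"
proof (induction xs)
  case Nil then show ?case by simp
next
  case (Cons a xs)
  have "1 \<le> length (f a)" using Cons.prems by simp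
  moreover have "length xs \<le> length (concat (map f xs))" using Cons by simp
  ultimately show ?case by simp
qed

definition st_in :: "'s nfa \<Rightarrow> nat \<Rightarrow> bool" where
  "st_in X p \<longleftrightarrow> p \<in> set (initial X) \<or> p \<in> set (final X) \<or>
     (\<exists>a q. (p, a, q) \<in> set (trans X) \<or> (q, a, p) \<in> set (trans X))"

lemma st_in_len: "st_in (X :: 's nfa) p \<Longrightarrow> length (nbits p) \<le> length (enc_nfa X)"
proof -
  assume s: "st_in X p"
  have l: "length (enc_nfa X) = length (concat (map nel (initial X)) :: 's tok list) + length (concat (map nel (final X)) :: 's tok list)
      + length (concat (map tel (trans X))) + 8"
    by (simp add: enc_nfa_eq)
  have nl: "length (nbits p) \<le> length (nel p :: 's tok list)" by (simp add: nel_def)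
  show ?thesis
  proof -
    { assume "p \<in> set (initial X)"
      then have "length (nel p :: 's tok list) \<le> length (concat (map nel (initial X)) :: 's tok list)" by (rule len_concat_mem)
      then have ?thesis using l nl by linarith }
    moreover
    { assume "p \<in> set (final X)"
      then have "length (nel p :: 's tok list) \<le> length (concat (map nel (final X)) :: 's tok list)" by (rule len_concat_mem)
      then have ?thesis using l nl by linarith }
    moreover
    { fix a q assume "(p, a, q) \<in> set (trans X)"
      then have "length (tel (p, a, q)) \<le> length (concat (map tel (trans X)))" by (rule len_concat_mem)
      then have ?thesis using l by (simp add: tel_def) }
    moreover
    { fix a q assume "(q, a, p) \<in> set (trans X)"
      then have "length (tel (q, a, p)) \<le> length (concat (map tel (trans X)))" by (rule len_concat_mem)
      then have ?thesis using l by (simp add: tel_def) }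
    ultimately show ?thesis using s unfolding st_in_def by blast
  qed
qed

lemma comp_len: "length (enc_nfa A) + length (enc_nfa B) + 1 = length (comp_enc (A, B))"
  by (simp add: comp_enc_simp)

lemma rec_len: "length (enc_rec Rs) = length (concat (map comp_enc Rs)) + 2"
  by (simp add: enc_rec_eq)

lemma len_Rs: "length Rs + 2 \<le> length (enc_rec Rs)"
proof -
  have "length Rs \<le> length (concat (map comp_enc Rs))"
    by (rule len_concat_ge) (auto simp: comp_enc_def split: prod.splits)
  then show ?thesis using rec_len[of Rs] by simp
qed

lemma comp_in_rec: "i < length Rs \<Longrightarrow> Rs ! i = (A, B) \<Longrightarrow>
  length (enc_nfa A) + length (enc_nfa B) + 3 \<le> length (enc_rec Rs)"
proof -
  assume i: "i < length Rs" and r: "Rs ! i = (A, B)"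
  have "(A, B) \<in> set Rs" using i r nth_mem by metis
  then have "length (comp_enc (A, B)) \<le> length (concat (map comp_enc Rs))" by (rule len_concat_mem)
  then show ?thesis using rec_len[of Rs] comp_len[of A B] by simp
qed

lemma pow_bound: "LL < m \<Longrightarrow> (2::nat) ^ LL \<le> 2 ^ m - 1"
proof -
  assume "LL < m"
  then have "(2::nat) ^ LL * 2 \<le> 2 ^ m" by (metis Suc_leI power_Suc2 power_increasing_iff one_less_numeral_iff semiring_norm(76))
  moreover have "1 \<le> (2::nat) ^ LL" by simp
  ultimately show ?thesis by linarith
qed

lemma Nid_bound: "i < length Rs \<Longrightarrow> Rs ! i = (A, B) \<Longrightarrow> st_in (if s then B else A) p \<Longrightarrow>
  Nid i s p < gn (GG Rs)"
proof -
  assume i: "i < length Rs" and r: "Rs ! i = (A, B)" and st: "st_in (if s then B else A) p"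
  let ?n = "length (enc_rec Rs)"
  have c: "length (enc_nfa A) + length (enc_nfa B) + 3 \<le> ?n" by (rule comp_in_rec[OF i r])
  have p: "length (nbits p) \<le> ?n"
    using st_in_len[OF st] c by (cases s) auto
  have ib: "length (nbits i) + 3 \<le> ?n" using len_nbits_le[of i] i len_Rs[of Rs] by linarith
  have LL: "length (Nbl i s p) < 4 * ?n" using p ib by (simp add: Nbl_def)
  have "Nid i s p < 2 ^ length (Nbl i s p)" by (simp add: Nid_def bnum_less)
  also have "\<dots> \<le> 2 ^ (4 * ?n) - 1" by (rule pow_bound[OF LL])
  finally show ?thesis by (simp add: GG_def)
qed

lemma Eid_bound: "i < length Rs \<Longrightarrow> Eid i < gn (GG Rs)"
proof -
  assume i: "i < length Rs"
  let ?n = "length (enc_rec Rs)"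
  have ib: "length (nbits i) + 3 \<le> ?n" using len_nbits_le[of i] i len_Rs[of Rs] by linarith
  have LL: "length (Ebl i) < 4 * ?n" using ib by (simp add: Ebl_def)
  have "Eid i < 2 ^ length (Ebl i)" by (simp add: Eid_def bnum_less)
  also have "\<dots> \<le> 2 ^ (4 * ?n) - 1" by (rule pow_bound[OF LL])
  finally show ?thesis by (simp add: GG_def)
qed

lemma mem_all: "e \<in> set (all_edges k cs) \<longleftrightarrow>
  (\<exists>i<length cs. e \<in> set (nfa_edges (k + i) False (fst (cs ! i))) \<or> e \<in> set (nfa_edges (k + i) True (snd (cs ! i))))"
proof (induction cs arbitrary: k)
  case Nil then show ?case by simp
next
  case (Cons c cs)
  let ?P = "\<lambda>k i. e \<in> set (nfa_edges (k + i) False (fst ((c # cs) ! i))) \<or> e \<in> set (nfa_edges (k + i) True (snd ((c # cs) ! i)))"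
  show ?case
  proof
    assume "e \<in> set (all_edges k (c # cs))"
    then have "e \<in> set (nfa_edges k False (fst c)) \<or> e \<in> set (nfa_edges k True (snd c)) \<or>
       (\<exists>i<length cs. e \<in> set (nfa_edges (Suc k + i) False (fst (cs ! i))) \<or> e \<in> set (nfa_edges (Suc k + i) True (snd (cs ! i))))"
      using Cons.IH[of "Suc k"] by simp
    then show "\<exists>i<length (c # cs). ?P k i"
    proof (elim disjE)
      assume "e \<in> set (nfa_edges k False (fst c))" then show ?thesis by (intro exI[of _ 0]) simp
    next
      assume "e \<in> set (nfa_edges k True (snd c))" then show ?thesis by (intro exI[of _ 0]) simp
    next
      assume "\<exists>i<length cs. e \<in> set (nfa_edges (Suc k + i) False (fst (cs ! i))) \<or> e \<in> set (nfa_edges (Suc k + i) True (snd (cs ! i)))"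
      then obtain i where "i < length cs" "e \<in> set (nfa_edges (Suc k + i) False (fst (cs ! i))) \<or> e \<in> set (nfa_edges (Suc k + i) True (snd (cs ! i)))"
        by blast
      then show ?thesis by (intro exI[of _ "Suc i"]) simp
    qed
  next
    assume "\<exists>i<length (c # cs). ?P k i"
    then obtain i where i: "i < length (c # cs)" "?P k i" by blast
    show "e \<in> set (all_edges k (c # cs))"
    proof (cases i)
      case 0 then show ?thesis using i by auto
    next
      case (Suc j)
      then have "\<exists>i<length cs. e \<in> set (nfa_edges (Suc k + i) False (fst (cs ! i))) \<or> e \<in> set (nfa_edges (Suc k + i) True (snd (cs ! i)))"
        using i by (intro exI[of _ j]) simp
      then show ?thesis using Cons.IH[of "Suc k"] by simp
    qed
  qed
qed

lemma mem_nfa_edges: "e \<in> set (nfa_edges i s X) \<longleftrightarrow>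
  (\<exists>p\<in>set (initial X). e = einit i s p) \<or> (\<exists>f\<in>set (final X). e = efin i s f) \<or> (\<exists>t\<in>set (trans X). e = etr i s t)"
  by (auto simp: nfa_edges_def)

lemma GG_edges: "e \<in> set (gedges (GG Rs)) \<longleftrightarrow>
  (\<exists>i<length Rs. \<exists>s. e \<in> set (nfa_edges i s ((if s then snd else fst) (Rs ! i))))"
proof -
  have "(\<exists>s. e \<in> set (nfa_edges i s ((if s then snd else fst) (Rs ! i)))) \<longleftrightarrow>
    e \<in> set (nfa_edges i False (fst (Rs ! i))) \<or> e \<in> set (nfa_edges i True (snd (Rs ! i)))" for i
    apply (rule iffI)
     apply (erule exE)
     apply (case_tac s)
      apply simp
     apply simp
    apply (erule disjE)
     apply (rule exI[of _ False])
     apply simp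
    apply (rule exI[of _ True])
    apply simp
    done
  then show ?thesis unfolding GG_def graph.sel mem_all by simp
qed

lemma GG_wf: "graph_wf (GG Rs)"
  unfolding graph_wf_def
proof (intro ballI, clarify)
  fix u a w assume e: "(u, a, w) \<in> set (gedges (GG Rs))"
  then obtain i s where i: "i < length Rs" and e': "(u, a, w) \<in> set (nfa_edges i s ((if s then snd else fst) (Rs ! i)))"
    unfolding GG_edges by blast
  obtain A B where r: "Rs ! i = (A, B)" by (cases "Rs ! i") auto
  let ?X = "if s then B else A"
  have X: "(if s then snd else fst) (Rs ! i) = ?X" using r by simp
  from e'[unfolded X mem_nfa_edges] show "u < gn (GG Rs) \<and> w < gn (GG Rs)"
  proof (elim disjE bexE)
    fix p assume "p \<in> set (initial ?X)" "(u, a, w) = einit i s p"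
    then show ?thesis using Eid_bound[OF i] Nid_bound[OF i r, of s p] by (auto simp: einit_def st_in_def)
  next
    fix p assume "p \<in> set (final ?X)" "(u, a, w) = efin i s p"
    then show ?thesis using Eid_bound[OF i] Nid_bound[OF i r, of s p] by (auto simp: efin_def st_in_def)
  next
    fix t assume t: "t \<in> set (trans ?X)" "(u, a, w) = etr i s t"
    obtain p b q where tt: "t = (p, b, q)" by (cases t) auto
    have "st_in ?X p" "st_in ?X q" using t tt unfolding st_in_def by blast+
    then show ?thesis using t tt Nid_bound[OF i r, of s p] Nid_bound[OF i r, of s q] by (auto simp: etr_def)
  qed
qed



definition lab :: "nat \<Rightarrow> ('s + nat) nfa" where "lab k = NFA [0] [1] [(0, Inr k, 1)]"

definition allsym :: "'s::finite list" where "allsym = (SOME l. set l = UNIV)"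

lemma set_ALL: "set (allsym :: 's::finite list) = UNIV"
  unfolding allsym_def by (rule someI_ex) (use finite_list[OF finite_UNIV] in blast)

definition sig :: "('s::finite + nat) nfa" where "sig = NFA [0] [0] (map (\<lambda>a. (0, Inl a, 0)) allsym)"

lemma lab_lang: "w \<in> nlang (lab k) \<longleftrightarrow> w = [Inr k]"
proof
  assume "w \<in> nlang (lab k)"
  then have r: "nrun (lab k) 0 w 1" by (simp add: nlang_def lab_def)
  then show "w = [Inr k]"
  proof cases
    case (nrun_cons a r w')
    then have "a = Inr k" "r = 1" by (auto simp: lab_def)
    with nrun_cons(3) have "w' = []" by cases (auto simp: lab_def)
    with nrun_cons \<open>a = Inr k\<close> show ?thesis by simp
  qed simp
next
  assume "w = [Inr k]"
  then show "w \<in> nlang (lab k)"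
    by (auto simp: nlang_def lab_def intro!: nrun.intros)
qed

lemma sig_run: "nrun (sig :: ('s::finite + nat) nfa) p w q \<Longrightarrow> \<exists>u. w = map Inl u"
proof (induction rule: nrun.induct)
  case (nrun_nil p) then show ?case by simp
next
  case (nrun_cons p a r w q)
  then obtain u where "w = map Inl u" by blast
  moreover from nrun_cons obtain b where "a = Inl b" by (auto simp: sig_def)
  ultimately show ?case by (intro exI[of _ "b # u"]) simp
qed

lemma sig_lang: "w \<in> nlang (sig :: ('s::finite + nat) nfa) \<longleftrightarrow> (\<exists>u. w = map Inl u)"
proof
  assume "w \<in> nlang sig"
  moreover have "initial (sig :: ('s::finite + nat) nfa) = [0]" "final (sig :: ('s::finite + nat) nfa) = [0]"
    by (simp_all add: sig_def)
  ultimately show "\<exists>u. w = map Inl u" by (auto simp: nlang_def dest: sig_run)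
next
  assume "\<exists>u. w = map Inl u"
  then obtain u where w: "w = map Inl u" by blast
  have "nrun (sig :: ('s::finite + nat) nfa) 0 (map Inl u) 0"
  proof (induction u)
    case Nil then show ?case by (simp add: nrun_nil)
  next
    case (Cons b u)
    have "(0, Inl b, 0) \<in> set (trans (sig :: ('s::finite + nat) nfa))" using set_ALL by (auto simp: sig_def)
    then show ?case using Cons by (simp add: nrun_cons)
  qed
  then show "w \<in> nlang sig" using w by (simp add: nlang_def sig_def)
qed

definition QQ :: "('s::finite + nat) crpq" where
  "QQ = CRPQ [(2, lab 0, 3), (3, sig, 4), (4, lab 2, 2), (2, lab 1, 5), (5, sig, 6), (6, lab 3, 2)] [(1, 4)]"

lemma QQ_wf: "crpq_wf QQ" by (simp add: crpq_wf_def QQ_def)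

lemma gpath_single: "gpath G u [a] w \<longleftrightarrow> (u, a, w) \<in> set (gedges G) \<and> w < gn G"
proof
  assume "gpath G u [a] w"
  then show "(u, a, w) \<in> set (gedges G) \<and> w < gn G"
  proof cases
    case (gpath_cons w')
    from gpath_cons(2) have "w' = w" "w < gn G" by (cases; simp)+
    with gpath_cons show ?thesis by simp
  qed
next
  assume "(u, a, w) \<in> set (gedges G) \<and> w < gn G"
  then show "gpath G u [a] w" by (auto intro: gpath.intros)
qed

definition XX :: "('s nfa \<times> 's nfa) list \<Rightarrow> nat \<Rightarrow> bool \<Rightarrow> 's nfa" where
  "XX Rs i s = (if s then snd else fst) (Rs ! i)"

lemma edge_cases: "e \<in> set (gedges (GG Rs)) \<Longrightarrow>
  (\<exists>i<length Rs. \<exists>s. (\<exists>p\<in>set (initial (XX Rs i s)). e = einit i s p) \<or> (\<exists>f\<in>set (final (XX Rs i s)). e = efin i s f)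
    \<or> (\<exists>t\<in>set (trans (XX Rs i s)). e = etr i s t))"
  unfolding GG_edges mem_nfa_edges XX_def by blast

lemma path_run: "gpath (GG Rs) (Nid i s p) (map Inl u) y \<Longrightarrow> i < length Rs \<Longrightarrow>
   \<exists>q. y = Nid i s q \<and> nrun (XX Rs i s) p u q"
proof (induction u arbitrary: p)
  case Nil
  then have "y = Nid i s p" by cases auto
  then show ?case by (auto intro: nrun_nil)
next
  case (Cons b u)
  from Cons.prems(1) obtain w where e: "(Nid i s p, Inl b, w) \<in> set (gedges (GG Rs))"
    and g: "gpath (GG Rs) w (map Inl u) y" by cases auto
  from edge_cases[OF e] obtain j s' where j: "j < length Rs" and
    d: "(\<exists>p'\<in>set (initial (XX Rs j s')). (Nid i s p, Inl b, w) = einit j s' p') \<or>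
        (\<exists>f\<in>set (final (XX Rs j s')). (Nid i s p, Inl b, w) = efin j s' f) \<or>
        (\<exists>t\<in>set (trans (XX Rs j s')). (Nid i s p, Inl b, w) = etr j s' t)" by blast
  then obtain q' where t: "(p, b, q') \<in> set (trans (XX Rs i s))" and w: "w = Nid i s q'"
    by (auto simp: einit_def efin_def etr_def dest!: Nid_inj split: prod.splits)
  from Cons.IH[OF g[unfolded w] Cons.prems(2)] obtain q where "y = Nid i s q" "nrun (XX Rs i s) q' u q"
    by blast
  then show ?case using t by (auto intro: nrun_cons)
qed

lemma run_path: "nrun X p u q \<Longrightarrow> X = XX Rs i s \<Longrightarrow> i < length Rs \<Longrightarrow> Nid i s q < gn (GG Rs) \<Longrightarrow>
  gpath (GG Rs) (Nid i s p) (map Inl u) (Nid i s q)"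
proof (induction rule: nrun.induct)
  case (nrun_nil p) then show ?case by (auto intro: gpath_nil)
next
  case (nrun_cons p a r w q)
  have "etr i s (p, a, r) \<in> set (gedges (GG Rs))"
    using nrun_cons unfolding GG_edges mem_nfa_edges XX_def by blast
  then show ?case using nrun_cons by (auto simp: etr_def intro: gpath_cons)
qed



lemma edge_Inr: fixes Rs :: "('s nfa \<times> 's nfa) list" shows "(x, Inr k, y) \<in> set (gedges (GG Rs)) \<Longrightarrow>
  \<exists>j<length Rs. \<exists>s. (\<exists>p\<in>set (initial (XX Rs j s)). x = Eid j \<and> y = Nid j s p \<and> k = (if s then 1 else 0))
     \<or> (\<exists>f\<in>set (final (XX Rs j s)). x = Nid j s f \<and> y = Eid j \<and> k = (if s then 3 else 2))"
proof -
  assume e: "(x, Inr k :: 's + nat, y) \<in> set (gedges (GG Rs))"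
  from edge_cases[OF e] obtain j s where j: "j < length Rs" and
    d: "(\<exists>p\<in>set (initial (XX Rs j s)). (x, Inr k :: 's + nat, y) = einit j s p) \<or> (\<exists>f\<in>set (final (XX Rs j s)). (x, Inr k :: 's + nat, y) = efin j s f)
    \<or> (\<exists>t\<in>set (trans (XX Rs j s)). (x, Inr k :: 's + nat, y) = etr j s t)"
    by blast
  from d show ?thesis
  proof (elim disjE bexE)
    fix p assume "p \<in> set (initial (XX Rs j s))" "(x, Inr k :: 's + nat, y) = einit j s p"
    then show ?thesis using j by (intro exI[of _ j] conjI exI[of _ s] disjI1) (auto simp: einit_def)
  next
    fix f assume "f \<in> set (final (XX Rs j s))" "(x, Inr k :: 's + nat, y) = efin j s f"
    then show ?thesis using j by (intro exI[of _ j] conjI exI[of _ s] disjI2) (auto simp: efin_def)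
  next
    fix t assume "(x, Inr k :: 's + nat, y) = etr j s t"
    then show ?thesis by (auto simp: etr_def split: prod.splits)
  qed
qed

lemma in_edges: "j < length Rs \<Longrightarrow> e \<in> set (nfa_edges j s (XX Rs j s)) \<Longrightarrow> e \<in> set (gedges (GG Rs))"
  unfolding GG_edges XX_def by blast

lemma map_Inl_inj: "map Inl u = map Inl v \<Longrightarrow> u = v"
  by (simp add: inj_map_eq_map inj_on_def)

lemma six: "(i::nat) < 6 \<Longrightarrow> i = 0 \<or> i = 1 \<or> i = 2 \<or> i = 3 \<or> i = 4 \<or> i = 5"
  by auto

lemma crpq_fwd: fixes Rs :: "('s::finite nfa \<times> 's nfa) list"
  shows "crpq_holds (liftS S) (GG Rs) QQ a a' \<Longrightarrow> rec_rel Rs \<inter> S \<noteq> {}"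
proof -
  assume "crpq_holds (liftS S) (GG Rs) QQ a a'"
  then obtain \<nu> ws where
    h: "\<forall>i<length (atoms (QQ :: ('s + nat) crpq)). case atoms (QQ :: ('s + nat) crpq) ! i of (u, A, u') \<Rightarrow> gpath (GG Rs) (\<nu> u) (ws ! i) (\<nu> u') \<and> ws ! i \<in> nlang A"
    and pr0: "\<forall>(i, j)\<in>set (pairs (QQ :: ('s + nat) crpq)). (ws ! i, ws ! j) \<in> liftS S"
    unfolding crpq_holds_def by blast
  have pr: "(ws ! 1, ws ! 4) \<in> liftS S" using pr0 by (simp add: QQ_def)
  have h0: "gpath (GG Rs) (\<nu> 2) (ws ! 0) (\<nu> 3)" "ws ! 0 \<in> nlang (lab 0)" using h[rule_format, of 0] by (auto simp: QQ_def)
  have h1: "gpath (GG Rs) (\<nu> 3) (ws ! 1) (\<nu> 4)" "ws ! 1 \<in> nlang sig" using h[rule_format, of 1] by (auto simp: QQ_def)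
  have h2: "gpath (GG Rs) (\<nu> 4) (ws ! 2) (\<nu> 2)" "ws ! 2 \<in> nlang (lab 2)" using h[rule_format, of 2] by (auto simp: QQ_def)
  have h3: "gpath (GG Rs) (\<nu> 2) (ws ! 3) (\<nu> 5)" "ws ! 3 \<in> nlang (lab 1)" using h[rule_format, of 3] by (auto simp: QQ_def)
  have h4: "gpath (GG Rs) (\<nu> 5) (ws ! 4) (\<nu> 6)" "ws ! 4 \<in> nlang sig" using h[rule_format, of 4] by (auto simp: QQ_def)
  have h5: "gpath (GG Rs) (\<nu> 6) (ws ! 5) (\<nu> 2)" "ws ! 5 \<in> nlang (lab 3)" using h[rule_format, of 5] by (auto simp: QQ_def)
  have e0: "(\<nu> 2, Inr 0, \<nu> 3) \<in> set (gedges (GG Rs))" using h0 by (simp add: lab_lang gpath_single)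
  from edge_Inr[OF e0] obtain j p where j: "j < length Rs" and p: "p \<in> set (initial (XX Rs j False))"
    and n2: "\<nu> 2 = Eid j" and n3: "\<nu> 3 = Nid j False p"
    by (auto split: if_splits)
  obtain u where u: "ws ! 1 = map Inl u" using h1(2) by (auto simp: sig_lang)
  from path_run[OF h1(1)[unfolded n3 u] j] obtain q where n4: "\<nu> 4 = Nid j False q"
    and ru: "nrun (XX Rs j False) p u q" by blast
  have e2: "(Nid j False q, Inr 2, Eid j) \<in> set (gedges (GG Rs))" using h2 n2 n4 by (simp add: lab_lang gpath_single)
  have q: "q \<in> set (final (XX Rs j False))"
    using edge_Inr[OF e2] by (auto dest!: Nid_inj simp: EN_neq split: if_splits)
  have e3: "(Eid j, Inr 1, \<nu> 5) \<in> set (gedges (GG Rs))" using h3 n2 by (simp add: lab_lang gpath_single)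
  from edge_Inr[OF e3] obtain p' where p': "p' \<in> set (initial (XX Rs j True))" and n5: "\<nu> 5 = Nid j True p'"
    by (auto dest!: Eid_inj simp: EN_neq EN_neq[symmetric] split: if_splits)
  obtain w where w: "ws ! 4 = map Inl w" using h4(2) by (auto simp: sig_lang)
  from path_run[OF h4(1)[unfolded n5 w] j] obtain q' where n6: "\<nu> 6 = Nid j True q'"
    and rw: "nrun (XX Rs j True) p' w q'" by blast
  have e5: "(Nid j True q', Inr 3, Eid j) \<in> set (gedges (GG Rs))" using h5 n2 n6 by (simp add: lab_lang gpath_single)
  have q': "q' \<in> set (final (XX Rs j True))"
    using edge_Inr[OF e5] by (auto dest!: Nid_inj simp: EN_neq split: if_splits)
  have S: "(u, w) \<in> S" using pr u w by (auto simp: liftS_def dest!: map_Inl_inj)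
  obtain A B where r: "Rs ! j = (A, B)" by (cases "Rs ! j") auto
  have mem: "(A, B) \<in> set Rs" using j r by (metis nth_mem)
  have "u \<in> nlang A" using p q ru r by (auto simp: nlang_def XX_def)
  moreover have "w \<in> nlang B" using p' q' rw r by (auto simp: nlang_def XX_def)
  ultimately have "(u, w) \<in> rec_rel Rs" using mem by (auto simp: rec_rel_def)
  then show ?thesis using S by blast
qed



lemma crpq_bwd: fixes Rs :: "('s::finite nfa \<times> 's nfa) list"
  assumes "rec_rel Rs \<inter> S \<noteq> {}" shows "crpq_holds (liftS S) (GG Rs) QQ 0 0"
proof -
  from assms obtain u w where uw: "(u, w) \<in> rec_rel Rs" and S: "(u, w) \<in> S" by auto
  from uw obtain A B where mem: "(A, B) \<in> set Rs" and ua: "u \<in> nlang A" and wb: "w \<in> nlang B"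
    by (auto simp: rec_rel_def)
  from mem obtain j where j: "j < length Rs" and r: "Rs ! j = (A, B)" by (metis in_set_conv_nth)
  have XF: "XX Rs j False = A" and XT: "XX Rs j True = B" using r by (simp_all add: XX_def)
  from ua obtain p f where p: "p \<in> set (initial A)" and f: "f \<in> set (final A)" and ru: "nrun A p u f"
    by (auto simp: nlang_def)
  from wb obtain p' f' where p': "p' \<in> set (initial B)" and f': "f' \<in> set (final B)" and rw: "nrun B p' w f'"
    by (auto simp: nlang_def)
  define \<nu> where "\<nu> = (\<lambda>n::nat. if n = 2 then Eid j else if n = 3 then Nid j False p else if n = 4 then Nid j False f
     else if n = 5 then Nid j True p' else if n = 6 then Nid j True f' else 0)"
  define ws where "ws = [[Inr 0], map Inl u, [Inr 2], [Inr 1], map Inl w, [Inr 3 :: 's + nat]]"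
  have bE: "Eid j < gn (GG Rs)" by (rule Eid_bound[OF j])
  have bp: "Nid j False p < gn (GG Rs)" using Nid_bound[OF j r, of False p] p by (simp add: st_in_def)
  have bf: "Nid j False f < gn (GG Rs)" using Nid_bound[OF j r, of False f] f by (simp add: st_in_def)
  have bp': "Nid j True p' < gn (GG Rs)" using Nid_bound[OF j r, of True p'] p' by (simp add: st_in_def)
  have bf': "Nid j True f' < gn (GG Rs)" using Nid_bound[OF j r, of True f'] f' by (simp add: st_in_def)
  have e0: "einit j False p \<in> set (gedges (GG Rs))"
    by (rule in_edges[OF j, of _ False]) (use p in \<open>auto simp: mem_nfa_edges XF\<close>)
  have e2: "efin j False f \<in> set (gedges (GG Rs))"
    by (rule in_edges[OF j, of _ False]) (use f in \<open>auto simp: mem_nfa_edges XF\<close>)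
  have e3: "einit j True p' \<in> set (gedges (GG Rs))"
    by (rule in_edges[OF j, of _ True]) (use p' in \<open>auto simp: mem_nfa_edges XT\<close>)
  have e5: "efin j True f' \<in> set (gedges (GG Rs))"
    by (rule in_edges[OF j, of _ True]) (use f' in \<open>auto simp: mem_nfa_edges XT\<close>)
  have g1: "gpath (GG Rs) (Nid j False p) (map Inl u) (Nid j False f)"
    by (rule run_path[OF ru _ j bf]) (simp add: XF)
  have g4: "gpath (GG Rs) (Nid j True p') (map Inl w) (Nid j True f')"
    by (rule run_path[OF rw _ j bf']) (simp add: XT)
  have at: "\<forall>i<length (atoms (QQ :: ('s + nat) crpq)). case atoms (QQ :: ('s + nat) crpq) ! i of (x, X, x') \<Rightarrow>
              gpath (GG Rs) (\<nu> x) (ws ! i) (\<nu> x') \<and> ws ! i \<in> nlang X"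
  proof (intro allI impI)
    fix i assume "i < length (atoms (QQ :: ('s + nat) crpq))"
    then have "i < 6" by (simp add: QQ_def)
    then show "case atoms (QQ :: ('s + nat) crpq) ! i of (x, X, x') \<Rightarrow>
              gpath (GG Rs) (\<nu> x) (ws ! i) (\<nu> x') \<and> ws ! i \<in> nlang X"
      using e0 e2 e3 e5 g1 g4 bE bp bf bp' bf'
      by (auto dest!: six simp: QQ_def ws_def \<nu>_def lab_lang sig_lang gpath_single einit_def efin_def)
  qed
  have pr: "\<forall>(i, k)\<in>set (pairs (QQ :: ('s + nat) crpq)). (ws ! i, ws ! k) \<in> liftS S"
    using S by (auto simp: QQ_def ws_def liftS_def)
  have l: "length ws = length (atoms (QQ :: ('s + nat) crpq))" by (simp add: ws_def QQ_def)
  have n01: "\<nu> 0 = 0" "\<nu> 1 = 0" by (simp_all add: \<nu>_def)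
  show ?thesis unfolding crpq_holds_def
    apply (rule exI[of _ \<nu>])
    apply (rule conjI[OF n01(1)])
    apply (rule conjI[OF n01(2)])
    apply (rule exI[of _ ws])
    using l at pr by blast
qed

lemma nbits_pow: "0 < K \<Longrightarrow> 2 ^ length (nbits K) \<le> 2 * K"
proof (induction K rule: less_induct)
  case (less K)
  have l: "length (nbits K) = Suc (length (nbits (K div 2)))" using less.prems by (subst nbits.simps) simp
  show ?case
  proof (cases "K = 1")
    case True then show ?thesis by (simp add: nbits_1)
  next
    case False
    then have "0 < K div 2" "K div 2 < K" using less.prems by auto
    then have "2 ^ length (nbits (K div 2)) \<le> 2 * (K div 2)" by (intro less.IH)
    then show ?thesis using l by simp
  qed
qed

lemma space_bound: "K \<le> n \<Longrightarrow> real (length (nbits K) + 1) \<le> 3 * log 2 (real n + 2)"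
proof -
  assume Kn: "K \<le> n"
  let ?L = "length (nbits K)"
  have pw: "(2::nat) ^ ?L \<le> 2 * (n + 2)"
  proof (cases "K = 0")
    case True then show ?thesis by (simp add: nbits.simps)
  next
    case False then show ?thesis using nbits_pow[of K] Kn by simp
  qed
  have pw': "(2::real) ^ ?L \<le> 2 * (real n + 2)"
  proof -
    have "real ((2::nat) ^ ?L) \<le> real (2 * (n + 2))" using pw by (simp only: of_nat_le_iff)
    then show ?thesis by simp
  qed
  have "log 2 ((2::real) ^ ?L) \<le> log 2 (2 * (real n + 2))"
    using pw' by (subst log_le_cancel_iff) auto
  moreover have "log 2 ((2::real) ^ ?L) = real ?L" by (simp add: log_nat_power)
  moreover have "log 2 (2 * (real n + 2)) = 1 + log 2 (real n + 2)"
  proof -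
    have "log 2 (2 * (real n + 2)) = log 2 2 + log 2 (real n + 2)" by (rule log_mult_pos) auto
    then show ?thesis by simp
  qed
  ultimately have a: "real ?L \<le> 1 + log 2 (real n + 2)" by simp
  have b: "1 \<le> log 2 (real n + 2)" by simp
  have c: "real (?L + 1) = real ?L + 1" by simp
  show ?thesis using a b c by linarith
qed

theorem mainTheorem2:
  fixes S :: "('s::finite list \<times> 's list) set"
  shows "\<exists>Q :: ('s + nat) crpq. crpq_wf Q \<and>
           (\<exists>(M :: ('s tok, 's tok) ltm) (c :: nat). tm_wf M \<and>
              (\<forall>Rs :: ('s nfa \<times> 's nfa) list.
                 tm_logspace_on M c (enc_rec Rs) \<and>
                 (\<exists>(G :: ('s + nat) graph) v v'.
                    graph_wf G \<and> v < gn G \<and> v' < gn G \<and>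
                    tm_computes M (enc_rec Rs) (enc_out G v v') \<and>
                    (crpq_holds (liftS S) G Q v v' \<longleftrightarrow> rec_rel Rs \<inter> S \<noteq> {}))))"
proof -
  have main: "\<forall>Rs :: ('s nfa \<times> 's nfa) list.
                 tm_logspace_on MM 3 (enc_rec Rs) \<and>
                 (\<exists>(G :: ('s + nat) graph) v v'.
                    graph_wf G \<and> v < gn G \<and> v' < gn G \<and>
                    tm_computes MM (enc_rec Rs) (enc_out G v v') \<and>
                    (crpq_holds (liftS S) G QQ v v' \<longleftrightarrow> rec_rel Rs \<inter> S \<noteq> {}))"
  proof (rule allI)
  fix Rs :: "('s nfa \<times> 's nfa) list"
  from run_all[of Rs] obtain ih wk wh where r: "rch (enc_rec Rs) (length (nbits (length Rs)) + 1) cinit (Halt, ih, wk, wh, final_out Rs)"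
    by blast
  note f = rch_final[OF r]
  have sb: "real (length (nbits (length Rs)) + 1) \<le> 3 * log 2 (real (length (enc_rec Rs)) + 2)"
    using space_bound len_Rs[of Rs] by simp
  have A: "tm_logspace_on MM 3 (enc_rec Rs)"
    unfolding tm_logspace_on_def
  proof
    fix t
    have "conf_whead (tm_conf MM (enc_rec Rs) t) \<le> length (nbits (length Rs)) + 1" using f by blast
    then have "real (conf_whead (tm_conf MM (enc_rec Rs) t)) \<le> real (length (nbits (length Rs)) + 1)"
      by (simp only: of_nat_le_iff)
    then show "real (conf_whead (tm_conf MM (enc_rec Rs) t)) \<le> real 3 * log 2 (real (length (enc_rec Rs)) + 2)"
      using sb by simp
  qed
  have gpos: "0 < gn (GG Rs)"
  proof -
    have "(1::nat) < 2 ^ (4 * length (enc_rec Rs))"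
      using len_Rs[of Rs] by (intro one_less_power) auto
    then show ?thesis by (simp add: GG_def)
  qed
  have B: "\<exists>(G :: ('s + nat) graph) v v'.
                    graph_wf G \<and> v < gn G \<and> v' < gn G \<and>
                    tm_computes MM (enc_rec Rs) (enc_out G v v') \<and>
                    (crpq_holds (liftS S) G QQ v v' \<longleftrightarrow> rec_rel Rs \<inter> S \<noteq> {})"
  proof (intro exI conjI)
    show "graph_wf (GG Rs)" by (rule GG_wf)
    show "0 < gn (GG Rs)" by (rule gpos)
    show "0 < gn (GG Rs)" by (rule gpos)
    show "tm_computes MM (enc_rec Rs) (enc_out (GG Rs) 0 0)" using f out_eq[of Rs] by simp
    show "crpq_holds (liftS S) (GG Rs) QQ 0 0 \<longleftrightarrow> rec_rel Rs \<inter> S \<noteq> {}"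
      using crpq_fwd crpq_bwd by blast
  qed
  show "tm_logspace_on MM 3 (enc_rec Rs) \<and>
                 (\<exists>(G :: ('s + nat) graph) v v'.
                    graph_wf G \<and> v < gn G \<and> v' < gn G \<and>
                    tm_computes MM (enc_rec Rs) (enc_out G v v') \<and>
                    (crpq_holds (liftS S) G QQ v v' \<longleftrightarrow> rec_rel Rs \<inter> S \<noteq> {}))"
    using A B by blast
  qed
  show ?thesis
    apply (rule exI[of _ QQ])
    apply (rule conjI[OF QQ_wf])
    apply (rule exI[of _ MM])
    apply (rule exI[of _ 3])
    apply (rule conjI[OF MM_wf])
    by (rule main)
qed


end
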